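(* Assume the standing setting below. Let $I$ be a dually safe feasible set and let $P=\{x_1,\dots,x_{2n+1}\}$ be an augmenting path for $I$. Put $S:=\mathring{\mathsf{span}}_M(I)\cap E_1$. Then $I\triangle P$ is independent in both $M$ and $N$, is dually safe, and: (A) $\mathsf{span}_M(I\triangle P)=\mathsf{span}_M(I\cup\{x_{2n+1}\})$; (B) $\mathsf{span}_N(I\triangle P)\cap E_0=\mathsf{span}_N(I\cup\{x_1\})\cap E_0$; (C) $\mathsf{span}_{N^*}(S)=\mathsf{span}_{N^*}(S\triangle P^1)$ and $S\triangle P^1$ is independent in $N^*$.
   Context: Standing setting: $E$ countable, $M$ a finitary matroid on $E$, $N$ a matroid on $E$ that is a direct sum of a finitary and a cofinitary matroid. $E_0$ = union of the finitary components of $N$, $E_1:=E\setminus E_0$, $F^j:=F\cap E_j$. $\mathring{\mathsf{span}}_M(F):=\mathsf{span}_M(F)\setminus F$; $F$ is dually safe if $F^1\subseteq\mathsf{span}_{N^*}(\mathring{\mathsf{span}}_M(F))$. $M/X:=(M^*\upharpoonright(E\setminus X))^*$, $M.X:=M/(E\setminus X)$. $W$ is an $(M,N)$-wave if $M\upharpoonright W$ has a base independent in $N.W$; $\mathsf{cond}(M,N)$: every wave $W$ has an $M$-independent base of $N.W$; $I$ independent in $M$ and $N$ is feasible if $\mathsf{cond}(M/I,N/I)$. For an independent set $J$ of a matroid $K$ and $e\notin J$ with $J\cup\{e\}$ dependent, $C_K(e,J)$ is the unique circuit in $J\cup\{e\}$. For $J$ independent in $M$ and $N$, the digraph $D(J)$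 on $E$ has an arc $xy$ iff one of: (1) $x\notin J$, $J\cup\{x\}$ is $M$-dependent and $y\in C_M(x,J)\setminus\{x\}$; (2) $x\in J^0$, $y\notin J$, $J\cup\{y\}$ is $N$-dependent and $x\in C_N(y,J)$; (3) $x\in J^1$, $T:=\mathring{\mathsf{span}}_M(J)^1$ is $N^*$-independent, $T\cup\{x\}$ is $N^*$-dependent and $y\in C_{N^*}(x,T)\setminus\{x\}$. An augmenting path for $J$ is a set $P=\{x_1,\dots,x_{2n+1}\}$ of distinct elements ($n\ge0$) with $x_1\in E_0\setminus\mathsf{span}_N(J)$, $x_{2n+1}\in E_0\setminus\mathsf{span}_M(J)$, $x_kx_{k+1}\in D(J)$ for $1\le k\le 2n$, and $x_kx_\ell\notin D(J)$ whenever $k+1<\ell$. *)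

theory Defs
  imports Main "HOL-Library.Countable_Set"
begin

text \<open>Matroids (possibly infinite) on a ground set E, given by an independence predicate.
  Axioms (I1)-(I3) and (IM) of Bruhn, Diestel, Kriesell, Pendavingh, Wollan.\<close>

definition base :: "'a set \<Rightarrow> ('a set \<Rightarrow> bool) \<Rightarrow> 'a set \<Rightarrow> bool" where
  "base E ind B \<longleftrightarrow> ind B \<and> B \<subseteq> E \<and> (\<forall>K. ind K \<and> K \<subseteq> E \<and> B \<subseteq> K \<longrightarrow> K = B)"

definition matroid :: "'a set \<Rightarrow> ('a set \<Rightarrow> bool) \<Rightarrow> bool" where
  "matroid E ind \<longleftrightarrow>
     (\<forall>I. ind I \<longrightarrow> I \<subseteq> E) \<and>
     ind {} \<and>
     (\<forall>I J. ind J \<and> I \<subseteq> J \<longrightarrow> ind I) \<and>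
     (\<forall>I B. ind I \<and> \<not> base E ind I \<and> base E ind B \<longrightarrow> (\<exists>x \<in> B - I. ind (insert x I))) \<and>
     (\<forall>I X. ind I \<and> I \<subseteq> X \<and> X \<subseteq> E \<longrightarrow>
        (\<exists>J. I \<subseteq> J \<and> J \<subseteq> X \<and> ind J \<and> (\<forall>K. ind K \<and> J \<subseteq> K \<and> K \<subseteq> X \<longrightarrow> K = J)))"

definition restr :: "'a set \<Rightarrow> ('a set \<Rightarrow> bool) \<Rightarrow> ('a set \<Rightarrow> bool)" where
  "restr X ind = (\<lambda>I. ind I \<and> I \<subseteq> X)"

definition dual :: "'a set \<Rightarrow> ('a set \<Rightarrow> bool) \<Rightarrow> ('a set \<Rightarrow> bool)" where
  "dual E ind = (\<lambda>X. X \<subseteq> E \<and> (\<exists>B. base E ind B \<and> X \<inter> B = {}))"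

definition contract :: "'a set \<Rightarrow> ('a set \<Rightarrow> bool) \<Rightarrow> 'a set \<Rightarrow> ('a set \<Rightarrow> bool)" where
  "contract E ind X = dual (E - X) (restr (E - X) (dual E ind))"

definition contract_to :: "'a set \<Rightarrow> ('a set \<Rightarrow> bool) \<Rightarrow> 'a set \<Rightarrow> ('a set \<Rightarrow> bool)" where
  "contract_to E ind X = contract E ind (E - X)"

definition circuit :: "'a set \<Rightarrow> ('a set \<Rightarrow> bool) \<Rightarrow> 'a set \<Rightarrow> bool" where
  "circuit E ind C \<longleftrightarrow> C \<subseteq> E \<and> \<not> ind C \<and> (\<forall>D. D \<subset> C \<longrightarrow> ind D)"

definition span :: "'a set \<Rightarrow> ('a set \<Rightarrow> bool) \<Rightarrow> 'a set \<Rightarrow> 'a set" where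
  "span E ind F = F \<union> {e \<in> E. \<exists>C. circuit E ind C \<and> e \<in> C \<and> C \<subseteq> insert e F}"

definition spanring :: "'a set \<Rightarrow> ('a set \<Rightarrow> bool) \<Rightarrow> 'a set \<Rightarrow> 'a set" where
  "spanring E ind F = span E ind F - F"

definition fcirc :: "'a set \<Rightarrow> ('a set \<Rightarrow> bool) \<Rightarrow> 'a \<Rightarrow> 'a set \<Rightarrow> 'a set" where
  "fcirc E ind e J = (THE C. circuit E ind C \<and> C \<subseteq> insert e J)"

definition finitary :: "'a set \<Rightarrow> ('a set \<Rightarrow> bool) \<Rightarrow> bool" where
  "finitary E ind \<longleftrightarrow> (\<forall>X. X \<subseteq> E \<and> (\<forall>F. F \<subseteq> X \<and> finite F \<longrightarrow> ind F) \<longrightarrow> ind X)"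

definition cofinitary :: "'a set \<Rightarrow> ('a set \<Rightarrow> bool) \<Rightarrow> bool" where
  "cofinitary E ind \<longleftrightarrow> finitary E (dual E ind)"

definition fin_cofin_sum :: "'a set \<Rightarrow> ('a set \<Rightarrow> bool) \<Rightarrow> bool" where
  "fin_cofin_sum E ind \<longleftrightarrow> (\<exists>A B. A \<inter> B = {} \<and> A \<union> B = E \<and>
      (\<forall>X. ind X \<longleftrightarrow> X \<subseteq> E \<and> ind (X \<inter> A) \<and> ind (X \<inter> B)) \<and>
      matroid A (restr A ind) \<and> matroid B (restr B ind) \<and>
      finitary A (restr A ind) \<and> cofinitary B (restr B ind))"

definition component :: "'a set \<Rightarrow> ('a set \<Rightarrow> bool) \<Rightarrow> 'a \<Rightarrow> 'a set" where
  "component E ind x = {y \<in> E. y = x \<or> (\<exists>C. circuit E ind C \<and> x \<in> C \<and> y \<in> C)}"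

definition E0 :: "'a set \<Rightarrow> ('a set \<Rightarrow> bool) \<Rightarrow> 'a set" where
  "E0 E ind = \<Union>{component E ind x | x. x \<in> E \<and>
       finitary (component E ind x) (restr (component E ind x) ind)}"

definition E1 :: "'a set \<Rightarrow> ('a set \<Rightarrow> bool) \<Rightarrow> 'a set" where
  "E1 E ind = E - E0 E ind"

definition symdiff :: "'a set \<Rightarrow> 'a set \<Rightarrow> 'a set" where
  "symdiff A B = (A - B) \<union> (B - A)"

definition dually_safe :: "'a set \<Rightarrow> ('a set \<Rightarrow> bool) \<Rightarrow> ('a set \<Rightarrow> bool) \<Rightarrow> 'a set \<Rightarrow> bool" where
  "dually_safe E indM indN F \<longleftrightarrow>
     F \<inter> E1 E indN \<subseteq> span E (dual E indN) (spanring E indM F)"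

definition wave :: "'a set \<Rightarrow> ('a set \<Rightarrow> bool) \<Rightarrow> ('a set \<Rightarrow> bool) \<Rightarrow> 'a set \<Rightarrow> bool" where
  "wave E indM indN W \<longleftrightarrow> W \<subseteq> E \<and>
     (\<exists>B. base W (restr W indM) B \<and> contract_to E indN W B)"

definition cond :: "'a set \<Rightarrow> ('a set \<Rightarrow> bool) \<Rightarrow> ('a set \<Rightarrow> bool) \<Rightarrow> bool" where
  "cond E indM indN \<longleftrightarrow> (\<forall>W. wave E indM indN W \<longrightarrow>
     (\<exists>B. base W (contract_to E indN W) B \<and> indM B))"

definition feasible :: "'a set \<Rightarrow> ('a set \<Rightarrow> bool) \<Rightarrow> ('a set \<Rightarrow> bool) \<Rightarrow> 'a set \<Rightarrow> bool" where
  "feasible E indM indN I \<longleftrightarrow> indM I \<and> indN I \<and>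
     cond (E - I) (contract E indM I) (contract E indN I)"

definition arc :: "'a set \<Rightarrow> ('a set \<Rightarrow> bool) \<Rightarrow> ('a set \<Rightarrow> bool) \<Rightarrow> 'a set \<Rightarrow> 'a \<Rightarrow> 'a \<Rightarrow> bool" where
  "arc E indM indN J x y \<longleftrightarrow> x \<in> E \<and> y \<in> E \<and>
     ((x \<notin> J \<and> \<not> indM (insert x J) \<and> y \<in> fcirc E indM x J - {x}) \<or>
      (x \<in> J \<inter> E0 E indN \<and> y \<notin> J \<and> \<not> indN (insert y J) \<and> x \<in> fcirc E indN y J) \<or>
      (x \<in> J \<inter> E1 E indN \<and>
        (let T = spanring E indM J \<inter> E1 E indN in
          dual E indN T \<and> \<not> dual E indN (insert x T) \<and>
          y \<in> fcirc E (dual E indN) x T - {x})))"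

text \<open>Augmenting path, given as the list [x_1, ..., x_{2n+1}].\<close>
definition aug_path :: "'a set \<Rightarrow> ('a set \<Rightarrow> bool) \<Rightarrow> ('a set \<Rightarrow> bool) \<Rightarrow> 'a set \<Rightarrow> 'a list \<Rightarrow> bool" where
  "aug_path E indM indN J xs \<longleftrightarrow> (\<exists>n. length xs = 2 * n + 1) \<and> distinct xs \<and>
     hd xs \<in> E0 E indN - span E indN J \<and>
     last xs \<in> E0 E indN - span E indM J \<and>
     (\<forall>k. Suc k < length xs \<longrightarrow> arc E indM indN J (xs ! k) (xs ! Suc k)) \<and>
     (\<forall>k l. k + 1 < l \<and> l < length xs \<longrightarrow> \<not> arc E indM indN J (xs ! k) (xs ! l))"

end

theory Submission
  imports Defs
begin


locale mat =
  fixes E :: "'a set" and ind :: "'a set \<Rightarrow> bool"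
  assumes m: "matroid E ind"
begin

lemma mparts: "\<forall>I. ind I \<longrightarrow> I \<subseteq> E" "ind {}" "\<forall>I J. ind J \<and> I \<subseteq> J \<longrightarrow> ind I"
  "\<forall>I B. ind I \<and> \<not> base E ind I \<and> base E ind B \<longrightarrow> (\<exists>x \<in> B - I. ind (insert x I))"
  "\<forall>I X. ind I \<and> I \<subseteq> X \<and> X \<subseteq> E \<longrightarrow>
        (\<exists>J. I \<subseteq> J \<and> J \<subseteq> X \<and> ind J \<and> (\<forall>K. ind K \<and> J \<subseteq> K \<and> K \<subseteq> X \<longrightarrow> K = J))"
  using m unfolding matroid_def apply - apply (erule conjE, assumption)
  apply (erule conjE)+ apply assumption apply (erule conjE)+ apply assumption
  apply (erule conjE)+ apply assumption apply (erule conjE)+ apply assumption done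

lemma subE: "ind I \<Longrightarrow> I \<subseteq> E" using mparts(1)[rule_format, of I] by blast
lemma ind_empty: "ind {}" using mparts(2) .
lemma ind_sub: "ind J \<Longrightarrow> I \<subseteq> J \<Longrightarrow> ind I" using mparts(3)[rule_format, of J I] by blast
lemma I3: "ind I \<Longrightarrow> \<not> base E ind I \<Longrightarrow> base E ind B \<Longrightarrow> \<exists>x\<in>B-I. ind (insert x I)"
  using mparts(4)[rule_format, of I B] by blast
lemma IM: "ind I \<Longrightarrow> I \<subseteq> X \<Longrightarrow> X \<subseteq> E \<Longrightarrow>
   \<exists>J. I \<subseteq> J \<and> J \<subseteq> X \<and> ind J \<and> (\<forall>K. ind K \<and> J \<subseteq> K \<and> K \<subseteq> X \<longrightarrow> K = J)"
  using mparts(5)[rule_format, of I X] by blast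

lemma base_ext: assumes "ind I" shows "\<exists>B. base E ind B \<and> I \<subseteq> B"
proof -
  obtain J where "I \<subseteq> J" "J \<subseteq> E" "ind J" "\<forall>K. ind K \<and> J \<subseteq> K \<and> K \<subseteq> E \<longrightarrow> K = J"
    using IM[OF assms subE[OF assms]] by blast
  then show ?thesis unfolding base_def by blast
qed

lemma base_ex: "\<exists>B. base E ind B" using base_ext ind_empty by blast

lemma maxin_base: assumes "base E ind B" "B \<subseteq> X" "ind K" "K \<subseteq> X"
  "\<forall>K'. ind K' \<and> K \<subseteq> K' \<and> K' \<subseteq> X \<longrightarrow> K' = K"
  shows "base E ind K"
proof (rule ccontr)
  assume "\<not> base E ind K"
  then obtain b where b: "b \<in> B - K" "ind (insert b K)" using I3[OF assms(3) _ assms(1)] by blast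
  then have "insert b K \<subseteq> X" using assms(2,4) by blast
  then have "insert b K = K" using assms(5)[rule_format, of "insert b K"] b by blast
  then show False using b by blast
qed

lemma baseD: assumes "base E ind B" shows "ind B" "B \<subseteq> E" "\<And>K. ind K \<Longrightarrow> K \<subseteq> E \<Longrightarrow> B \<subseteq> K \<Longrightarrow> K = B"
  using assms unfolding base_def by blast+

lemma base_psub: assumes "base E ind B" "ind K" "K \<subseteq> E" "B \<subset> K" shows False
  using baseD(3)[OF assms(1-3)] assms(4) by blast

lemma base_swap: assumes "base E ind K" "base E ind B" "x \<in> K" "x \<notin> B" "K \<subseteq> insert x B"
  shows "\<exists>y\<in>B. y \<notin> K \<and> K = insert x (B - {y})"
proof -
  have nb: "\<not> base E ind (K - {x})"
  proof
    assume "base E ind (K - {x})"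
    moreover have "K - {x} \<subset> K" using assms(3) by blast
    ultimately show False using base_psub baseD(1,2)[OF assms(1)] by blast
  qed
  have "ind (K - {x})" using baseD(1)[OF assms(1)] ind_sub by blast
  then obtain y where y: "y \<in> B - (K - {x})" "ind (insert y (K - {x}))"
    using I3[OF _ nb assms(2)] by blast
  have yx: "y \<noteq> x" using y assms(4) by blast
  have yK: "y \<notin> K" using y yx by blast
  have yE: "y \<in> E" using y baseD(2)[OF assms(2)] by blast
  have bb: "base E ind (insert y (K - {x}))"
  proof (rule ccontr)
    assume nb2: "\<not> base E ind (insert y (K - {x}))"
    obtain w where w: "w \<in> K - insert y (K - {x})" "ind (insert w (insert y (K - {x})))"
      using I3[OF y(2) nb2 assms(1)] by blast
    then have "w = x" by blast
    moreover have "insert x (insert y (K - {x})) = insert y K" using assms(3) by blast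
    ultimately have "ind (insert y K)" using w by simp
    moreover have "K \<subset> insert y K" using yK by blast
    moreover have "insert y K \<subseteq> E" using yE baseD(2)[OF assms(1)] by blast
    ultimately show False using base_psub[OF assms(1)] by blast
  qed
  have sub: "insert y (K - {x}) \<subseteq> B" using y assms(5) by blast
  have "B = insert y (K - {x})" using baseD(3)[OF bb baseD(1,2)[OF assms(2)] sub] .
  then have "K = insert x (B - {y})" using yK yx assms(3) by auto
  then show ?thesis using y yK by blast
qed

lemma exch_base: assumes "base E ind B" "y \<in> B" "x \<notin> B" "ind (insert x (B - {y}))"
  shows "base E ind (insert x (B - {y}))"
proof (rule ccontr)
  assume "\<not> base E ind (insert x (B - {y}))"
  then obtain w where w: "w \<in> B - insert x (B - {y})" "ind (insert w (insert x (B - {y})))"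
    using I3[OF assms(4) _ assms(1)] by blast
  then have "w = y" by blast
  moreover have "insert y (insert x (B - {y})) = insert x B" using assms(2) by blast
  ultimately have "ind (insert x B)" using w by simp
  moreover have "B \<subset> insert x B" using assms(3) by blast
  ultimately show False using base_psub[OF assms(1)] subE by blast
qed

lemma fc_main: assumes J: "ind J" and xE: "x \<in> E" and xJ: "x \<notin> J" and dep: "\<not> ind (insert x J)"
  shows "\<exists>C. circuit E ind C \<and> C \<subseteq> insert x J \<and> x \<in> C \<and>
      (\<forall>D. circuit E ind D \<and> D \<subseteq> insert x J \<longrightarrow> D = C)"
proof -
  obtain B where B: "base E ind B" "J \<subseteq> B" using base_ext J by blast
  have xB: "x \<notin> B"
  proof
    assume "x \<in> B"
    then have "insert x J \<subseteq> B" using B(2) by blast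
    then show False using ind_sub[OF baseD(1)[OF B(1)]] dep by blast
  qed
  have BE: "B \<subseteq> E" using B unfolding base_def by blast
  define C where "C = insert x {y \<in> B. ind (insert x (B - {y}))}"
  have key: "\<exists>y\<in>B. K = insert x (B - {y})" if K1: "ind K" and K2: "Z \<subseteq> K" and K3: "K \<subseteq> insert x B"
     and K4: "\<forall>K'. ind K' \<and> K \<subseteq> K' \<and> K' \<subseteq> insert x B \<longrightarrow> K' = K" and xZ: "x \<in> Z" for K Z
  proof -
    have bK: "base E ind K" using maxin_base[OF B(1) _ K1 K3 K4] by blast
    have xK: "x \<in> K" using K2 xZ by blast
    obtain y where "y \<in> B" "K = insert x (B - {y})" using base_swap[OF bK B(1) xK xB K3] by blast
    then show ?thesis by blast
  qed
  have CJ: "C \<subseteq> insert x J"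
  proof
    fix y assume yC: "y \<in> C"
    show "y \<in> insert x J"
    proof (rule ccontr)
      assume ny: "y \<notin> insert x J"
      then have yB: "y \<in> B" and iy: "ind (insert x (B - {y}))" using yC C_def by auto
      have "insert x J \<subseteq> insert x (B - {y})" using B(2) ny by blast
      then show False using dep ind_sub[OF iy] by blast
    qed
  qed
  have CE: "C \<subseteq> E" using C_def BE xE by blast
  have proper: "ind D" if DC: "D \<subset> C" for D
  proof -
    obtain c where c: "c \<in> C" "c \<notin> D" using DC by blast
    show ?thesis
    proof (cases "c = x")
      case True
      then have "D \<subseteq> B" using DC c C_def by blast
      then show ?thesis using baseD(1)[OF B(1)] ind_sub by blast
    next
      case False
      then have "c \<in> B" "ind (insert x (B - {c}))" using c C_def by auto
      moreover have "D \<subseteq> insert x (B - {c})" using DC c C_def by blast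
      ultimately show ?thesis using ind_sub by blast
    qed
  qed
  have CxB: "C \<subseteq> insert x B" unfolding C_def by blast
  have xBE: "insert x B \<subseteq> E" using BE xE by blast
  have xC: "x \<in> C" unfolding C_def by blast
  have depC: "\<not> ind C"
  proof
    assume iC: "ind C"
    obtain K where K: "C \<subseteq> K" "K \<subseteq> insert x B" "ind K"
        "\<forall>K'. ind K' \<and> K \<subseteq> K' \<and> K' \<subseteq> insert x B \<longrightarrow> K' = K"
      using IM[OF iC CxB xBE] by blast
    obtain y where y: "y \<in> B" "K = insert x (B - {y})" using key[OF K(3,1,2,4) xC] by blast
    have "ind (insert x (B - {y}))" using K(3) y(2) by simp
    then have "y \<in> C" using y(1) unfolding C_def by blast
    then have "y \<in> insert x (B - {y})" using K(1) y(2) by blast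
    then show False using y(1) xB by blast
  qed
  have circ: "circuit E ind C" unfolding circuit_def using CE depC proper by blast
  have uniq: "D = C" if D: "circuit E ind D" "D \<subseteq> insert x J" for D
  proof -
    have Dc: "\<not> ind D" "\<And>D'. D' \<subset> D \<Longrightarrow> ind D'" using D(1) unfolding circuit_def by blast+
    have xD: "x \<in> D"
    proof (rule ccontr)
      assume "x \<notin> D"
      then have "D \<subseteq> B" using D B by blast
      then show False using Dc baseD(1)[OF B(1)] ind_sub by blast
    qed
    have "D \<subseteq> C"
    proof
      fix y assume yD: "y \<in> D"
      show "y \<in> C"
      proof (cases "y = x")
        case True then show ?thesis using xC by simp
      next
        case False
        have iDy: "ind (D - {y})" using Dc(2) yD by blast
        have DyB: "D - {y} \<subseteq> insert x B" using D B by blast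
        obtain K where K: "D - {y} \<subseteq> K" "K \<subseteq> insert x B" "ind K"
            "\<forall>K'. ind K' \<and> K \<subseteq> K' \<and> K' \<subseteq> insert x B \<longrightarrow> K' = K"
          using IM[OF iDy DyB xBE] by blast
        have xDy: "x \<in> D - {y}" using xD False by blast
        obtain y' where y': "y' \<in> B" "K = insert x (B - {y'})"
          using key[OF K(3,1,2,4) xDy] by blast
        show ?thesis
        proof (cases "y' = y")
          case True
          have "ind (insert x (B - {y}))" using K(3) y'(2) True by simp
          moreover have "y \<in> B" using y'(1) True by simp
          ultimately show ?thesis unfolding C_def by blast
        next
          case False
          have "y \<in> B" using yD D \<open>y \<noteq> x\<close> B by blast
          then have "y \<in> K" using y'(2) False by blast
          then have "D \<subseteq> K" using K(1) by blast
          then show ?thesis using K(3) Dc(1) ind_sub by blast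
        qed
      qed
    qed
    show "D = C"
    proof (rule ccontr)
      assume "D \<noteq> C"
      then have "D \<subset> C" using \<open>D \<subseteq> C\<close> by blast
      then show False using proper Dc(1) by blast
    qed
  qed
  show ?thesis using circ CJ uniq xC by blast
qed
end

declare [[blast_depth_limit = 10]]
context mat begin

lemma circD: assumes "circuit E ind C" shows "C \<subseteq> E" "\<not> ind C" "\<And>D. D \<subset> C \<Longrightarrow> ind D"
  using assms unfolding circuit_def by blast+

lemma circ_del: assumes "circuit E ind C" "c \<in> C" shows "ind (C - {c})"
  using circD(3)[OF assms(1)] assms(2) by blast

lemma fc: assumes "ind J" "x \<in> E" "x \<notin> J" "\<not> ind (insert x J)"
  shows "circuit E ind (fcirc E ind x J)" "fcirc E ind x J \<subseteq> insert x J" "x \<in> fcirc E ind x J"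
    "\<And>D. circuit E ind D \<Longrightarrow> D \<subseteq> insert x J \<Longrightarrow> D = fcirc E ind x J"
proof -
  obtain C where C: "circuit E ind C" "C \<subseteq> insert x J" "x \<in> C"
      "\<forall>D. circuit E ind D \<and> D \<subseteq> insert x J \<longrightarrow> D = C"
    using fc_main[OF assms] by blast
  have eq: "fcirc E ind x J = C" unfolding fcirc_def
  proof (rule the_equality)
    show "circuit E ind C \<and> C \<subseteq> insert x J" using C by blast
    show "\<And>D. circuit E ind D \<and> D \<subseteq> insert x J \<Longrightarrow> D = C" using C(4) by blast
  qed
  show "circuit E ind (fcirc E ind x J)" "fcirc E ind x J \<subseteq> insert x J" "x \<in> fcirc E ind x J"
    using C(1-3) eq by simp_all
  show "\<And>D. circuit E ind D \<Longrightarrow> D \<subseteq> insert x J \<Longrightarrow> D = fcirc E ind x J"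
    unfolding eq using C(4) by blast
qed

lemma dep_circ: assumes "\<not> ind X" "X \<subseteq> E" shows "\<exists>C. circuit E ind C \<and> C \<subseteq> X"
proof -
  obtain J where J: "{} \<subseteq> J" "J \<subseteq> X" "ind J" "\<forall>K. ind K \<and> J \<subseteq> K \<and> K \<subseteq> X \<longrightarrow> K = J"
    using IM[OF ind_empty _ assms(2)] by blast
  have "J \<noteq> X" using J(3) assms(1) by blast
  then obtain x where x: "x \<in> X" "x \<notin> J" using J(2) by blast
  have dep: "\<not> ind (insert x J)"
  proof
    assume i: "ind (insert x J)"
    have "insert x J \<subseteq> X" using x J(2) by blast
    then have "insert x J = J" using J(4)[rule_format, of "insert x J"] i by blast
    then show False using x by blast
  qed
  have "x \<in> E" using x assms(2) by blast
  then show ?thesis using fc(1,2)[OF J(3) _ x(2) dep] x J(2) by blast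
qed

lemma span_ind: assumes "ind F"
  shows "e \<in> span E ind F \<longleftrightarrow> e \<in> F \<or> (e \<in> E \<and> \<not> ind (insert e F))"
proof
  assume "e \<in> span E ind F"
  then have "e \<in> F \<or> (e \<in> E \<and> (\<exists>C. circuit E ind C \<and> e \<in> C \<and> C \<subseteq> insert e F))"
    unfolding span_def by blast
  then show "e \<in> F \<or> (e \<in> E \<and> \<not> ind (insert e F))"
    using circD(2) ind_sub by blast
next
  assume a: "e \<in> F \<or> (e \<in> E \<and> \<not> ind (insert e F))"
  show "e \<in> span E ind F"
  proof (cases "e \<in> F")
    case True then show ?thesis unfolding span_def by blast
  next
    case False
    then have "e \<in> E" "\<not> ind (insert e F)" using a by blast+
    then show ?thesis using fc(1,2,3)[OF assms _ False] unfolding span_def by blast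
  qed
qed

lemma span_mono: "F \<subseteq> G \<Longrightarrow> span E ind F \<subseteq> span E ind G"
  unfolding span_def by blast

lemma span_sup: "F \<subseteq> span E ind F" unfolding span_def by blast

lemma exch_ind: assumes J: "ind J" and x: "x \<in> E" "x \<notin> J" and dep: "\<not> ind (insert x J)"
  and y: "y \<in> fcirc E ind x J" "y \<noteq> x"
  shows "ind (insert x (J - {y}))"
proof (rule ccontr)
  assume d: "\<not> ind (insert x (J - {y}))"
  have iJ: "ind (J - {y})" using ind_sub[OF J] by blast
  have xJ': "x \<notin> J - {y}" using x by blast
  have D: "circuit E ind (fcirc E ind x (J - {y}))" "fcirc E ind x (J - {y}) \<subseteq> insert x (J - {y})"
    using fc(1,2)[OF iJ x(1) xJ' d] by blast+
  have "fcirc E ind x (J - {y}) \<subseteq> insert x J" using D(2) by blast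
  then have "fcirc E ind x (J - {y}) = fcirc E ind x J" using fc(4)[OF J x dep D(1)] by blast
  then show False using D(2) y by blast
qed

lemma exch_span_aux: assumes J: "ind J" and x: "x \<in> E" "x \<notin> J" and dep: "\<not> ind (insert x J)"
  and y: "y \<in> fcirc E ind x J" "y \<noteq> x"
  and e: "e \<notin> insert x J" and ie: "ind (insert e J)"
  shows "ind (insert e (insert x (J - {y})))"
proof (rule ccontr)
  let ?J' = "insert x (J - {y})"
  let ?C = "fcirc E ind x J"
  assume d: "\<not> ind (insert e ?J')"
  have iJ': "ind ?J'" using exch_ind[OF assms(1-6)] .
  have eE: "e \<in> E" using subE[OF ie] by blast
  have eJ': "e \<notin> ?J'" using e by blast
  note D = fc[OF iJ' eE eJ' d]
  note C = fc[OF J x dep]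
  have xD: "x \<in> fcirc E ind e ?J'"
  proof (rule ccontr)
    assume "x \<notin> fcirc E ind e ?J'"
    then have "fcirc E ind e ?J' \<subseteq> insert e J" using D(2) by blast
    then show False using ind_sub[OF ie] circD(2)[OF D(1)] by blast
  qed
  have eC: "e \<notin> ?C" using C(2) e by blast
  have neq: "fcirc E ind e ?J' \<noteq> ?C" using D(3) eC by blast
  let ?Z = "(?C \<union> fcirc E ind e ?J') - {x}"
  have Zsub: "?Z \<subseteq> insert e J" using C(2) D(2) by blast
  have iZ: "ind ?Z" using ind_sub[OF ie Zsub] .
  have xZ: "x \<notin> ?Z" by blast
  have depZ: "\<not> ind (insert x ?Z)"
  proof
    assume "ind (insert x ?Z)"
    moreover have "?C \<subseteq> insert x ?Z" by blast
    ultimately show False using ind_sub circD(2)[OF C(1)] by blast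
  qed
  have "?C \<subseteq> insert x ?Z" by blast
  then have c1: "?C = fcirc E ind x ?Z" using fc(4)[OF iZ x(1) xZ depZ C(1)] by blast
  have "fcirc E ind e ?J' \<subseteq> insert x ?Z" by blast
  then have c2: "fcirc E ind e ?J' = fcirc E ind x ?Z" using fc(4)[OF iZ x(1) xZ depZ D(1)] by blast
  show False using neq c1 c2 by simp
qed

lemma exch_span: assumes J: "ind J" and x: "x \<in> E" "x \<notin> J" and dep: "\<not> ind (insert x J)"
  and y: "y \<in> fcirc E ind x J" "y \<noteq> x"
  shows "span E ind (insert x (J - {y})) = span E ind J"
proof -
  let ?J' = "insert x (J - {y})"
  let ?C = "fcirc E ind x J"
  note C = fc[OF J x dep]
  have iJ': "ind ?J'" using exch_ind[OF assms] .
  have yJ: "y \<in> J" using C(2) y by blast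
  have yE: "y \<in> E" using subE[OF J] yJ by blast
  have yJ': "y \<notin> ?J'" using y by blast
  have eqJ: "insert y ?J' = insert x J" using yJ by blast
  have dep': "\<not> ind (insert y ?J')" using dep eqJ by simp
  have C': "?C = fcirc E ind y ?J'" using fc(4)[OF iJ' yE yJ' dep' C(1)] C(2) eqJ by simp
  have xC': "x \<in> fcirc E ind y ?J'" using C(3) C' by simp
  have backJ: "insert y (?J' - {x}) = J" using yJ x(2) by blast
  have "e \<in> span E ind ?J' \<longleftrightarrow> e \<in> span E ind J" for e
  proof (cases "e \<in> insert x J")
    case True
    then consider "e = x" | "e = y" | "e \<in> J" "e \<noteq> y" by blast
    then show ?thesis
    proof cases
      case 1 then show ?thesis using span_ind[OF iJ'] span_ind[OF J] x dep by blast
    next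
      case 2 then show ?thesis using span_ind[OF iJ'] span_ind[OF J] yJ yE dep' by blast
    next
      case 3 then show ?thesis using span_ind[OF iJ'] span_ind[OF J] by blast
    qed
  next
    case False
    have e': "e \<notin> insert y ?J'" using False eqJ by simp
    have "ind (insert e J) \<longleftrightarrow> ind (insert e ?J')"
    proof
      assume "ind (insert e J)"
      then show "ind (insert e ?J')" using exch_span_aux[OF assms False] by blast
    next
      assume a: "ind (insert e ?J')"
      have "ind (insert e (insert y (?J' - {x})))"
        using exch_span_aux[OF iJ' yE yJ' dep' xC' _ e' a] y(2) by blast
      then show "ind (insert e J)" using backJ by simp
    qed
    then show ?thesis using span_ind[OF iJ'] span_ind[OF J] False by blast
  qed
  then show ?thesis by blast
qed

end


definition maxin :: "('a set \<Rightarrow> bool) \<Rightarrow> 'a set \<Rightarrow> 'a set \<Rightarrow> bool" where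
  "maxin ind X J \<longleftrightarrow> J \<subseteq> X \<and> ind J \<and> (\<forall>K. ind K \<and> J \<subseteq> K \<and> K \<subseteq> X \<longrightarrow> K = J)"

context mat begin

lemma maxinD: assumes "maxin ind X J" shows "J \<subseteq> X" "ind J" "\<And>b. b \<in> X \<Longrightarrow> b \<notin> J \<Longrightarrow> \<not> ind (insert b J)"
proof -
  show "J \<subseteq> X" "ind J" using assms unfolding maxin_def by blast+
  fix b assume b: "b \<in> X" "b \<notin> J"
  show "\<not> ind (insert b J)"
  proof
    assume i: "ind (insert b J)"
    have "insert b J \<subseteq> X" using b \<open>J \<subseteq> X\<close> by blast
    then have "insert b J = J" using assms i unfolding maxin_def by blast
    then show False using b by blast
  qed
qed

lemma maxinI: assumes "J \<subseteq> X" "ind J" "\<And>b. b \<in> X \<Longrightarrow> b \<notin> J \<Longrightarrow> \<not> ind (insert b J)"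
  shows "maxin ind X J"
  unfolding maxin_def
proof (intro conjI allI impI)
  fix K assume K: "ind K \<and> J \<subseteq> K \<and> K \<subseteq> X"
  show "K = J"
  proof (rule ccontr)
    assume "K \<noteq> J"
    then obtain b where b: "b \<in> K" "b \<notin> J" using K by blast
    have "insert b J \<subseteq> K" using b K by blast
    then have "ind (insert b J)" using K ind_sub by blast
    then show False using assms(3) b K by blast
  qed
qed (use assms in blast)+

lemma maxin_ex: assumes "ind I" "I \<subseteq> X" "X \<subseteq> E" shows "\<exists>J. I \<subseteq> J \<and> maxin ind X J"
  using IM[OF assms] unfolding maxin_def by blast

lemma base_maxin: "base E ind B \<longleftrightarrow> maxin ind E B"
  unfolding base_def maxin_def by blast

lemma span_inv: assumes X: "X \<subseteq> E" and K: "maxin ind X K" and K': "maxin ind X K'"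
  and e: "e \<notin> X" and ie: "ind (insert e K)"
  shows "ind (insert e K')"
proof (rule ccontr)
  assume d: "\<not> ind (insert e K')"
  obtain B where B: "base E ind B" "insert e K \<subseteq> B" using base_ext[OF ie] by blast
  note Bd = baseD[OF B(1)]
  have BX: "B \<inter> X = K"
  proof
    show "K \<subseteq> B \<inter> X" using B(2) maxinD(1)[OF K] by blast
    show "B \<inter> X \<subseteq> K"
    proof
      fix b assume b: "b \<in> B \<inter> X"
      show "b \<in> K"
      proof (rule ccontr)
        assume "b \<notin> K"
        then have "\<not> ind (insert b K)" using maxinD(3)[OF K] b by blast
        moreover have "insert b K \<subseteq> B" using b B(2) by blast
        ultimately show False using ind_sub Bd(1) by blast
      qed
    qed
  qed
  define Q where "Q = B - X - {e}"
  have XQE: "X \<union> Q \<subseteq> E" using X Bd(2) Q_def by blast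
  have K'XQ: "K' \<subseteq> X \<union> Q" using maxinD(1)[OF K'] by blast
  obtain J where J: "K' \<subseteq> J" "maxin ind (X \<union> Q) J" using maxin_ex[OF maxinD(2)[OF K'] K'XQ XQE] by blast
  note Jd = maxinD[OF J(2)]
  have bJ: "base E ind J"
  proof (rule ccontr)
    assume "\<not> base E ind J"
    then obtain b where b: "b \<in> B - J" "ind (insert b J)" using I3[OF Jd(2) _ B(1)] by blast
    show False
    proof (cases "b = e")
      case True
      then have "insert e K' \<subseteq> insert b J" using J(1) by blast
      then show False using d ind_sub b(2) by blast
    next
      case False
      then have "b \<in> X \<union> Q" using b Q_def by blast
      then show False using Jd(3) b by blast
    qed
  qed
  have iBe: "ind (B - {e})" using Bd(1) ind_sub by blast
  have nbBe: "\<not> base E ind (B - {e})"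
  proof
    assume "base E ind (B - {e})"
    moreover have "e \<in> B" using B(2) by blast
    ultimately have "B = B - {e}" using baseD(3) Bd(1,2) by blast
    then show False using \<open>e \<in> B\<close> by blast
  qed
  obtain b where b: "b \<in> J - (B - {e})" "ind (insert b (B - {e}))" using I3[OF iBe nbBe bJ] by blast
  have QB: "Q \<subseteq> B - {e}" unfolding Q_def by blast
  have bX1: "b \<in> X" using b Jd(1) QB by blast
  have eK: "e \<notin> K" using e maxinD(1)[OF K] by blast
  have bX2: "b \<notin> K" using b B(2) eK by blast
  note bX = bX1 bX2
  have "insert b K \<subseteq> insert b (B - {e})" using B(2) e maxinD(1)[OF K] by blast
  then have "ind (insert b K)" using b(2) ind_sub by blast
  then show False using maxinD(3)[OF K bX] by blast
qed

lemma span_E: "span E ind F \<subseteq> E \<union> F" unfolding span_def by blast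

lemma span_trans: assumes L: "ind L" and A: "A \<subseteq> span E ind L" shows "span E ind A \<subseteq> span E ind L"
proof
  fix e assume eA: "e \<in> span E ind A"
  show "e \<in> span E ind L"
  proof (cases "e \<in> A \<or> e \<in> L")
    case True then show ?thesis using A span_sup by blast
  next
    case False
    then obtain C where C: "circuit E ind C" "e \<in> C" "C \<subseteq> insert e A" "e \<in> E"
      using eA unfolding span_def by blast
    have LE: "L \<subseteq> E" using subE[OF L] .
    have AE: "A \<subseteq> E" using A span_E LE by blast
    let ?X = "L \<union> A"
    have XE: "?X \<subseteq> E" using LE AE by blast
    have mL: "maxin ind ?X L"
    proof (rule maxinI)
      fix b assume b: "b \<in> ?X" "b \<notin> L"
      then have "b \<in> span E ind L" using A by blast
      then show "\<not> ind (insert b L)" using span_ind[OF L] b by blast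
    qed (use L in blast)+
    have iC: "ind (C - {e})" using circ_del[OF C(1,2)] .
    have CX: "C - {e} \<subseteq> ?X" using C(3) by blast
    obtain K where K: "C - {e} \<subseteq> K" "maxin ind ?X K" using maxin_ex[OF iC CX XE] by blast
    have eX: "e \<notin> ?X" using False by blast
    have "\<not> ind (insert e K)"
    proof
      assume "ind (insert e K)"
      moreover have "C \<subseteq> insert e K" using K(1) by blast
      ultimately show False using ind_sub circD(2)[OF C(1)] by blast
    qed
    then have "\<not> ind (insert e L)" using span_inv[OF XE mL K(2) eX] by blast
    then show ?thesis using span_ind[OF L] C(4) by blast
  qed
qed

lemma rel_I3: assumes X: "X \<subseteq> E" and I: "ind I" "I \<subseteq> X" and nm: "\<not> maxin ind X I"
  and K: "maxin ind X K" shows "\<exists>b\<in>K - I. ind (insert b I)"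
proof (rule ccontr)
  assume no: "\<not> (\<exists>b\<in>K - I. ind (insert b I))"
  obtain z where z: "z \<in> X" "z \<notin> I" "ind (insert z I)"
  proof -
    have "\<not> (\<forall>b. b \<in> X \<longrightarrow> b \<notin> I \<longrightarrow> \<not> ind (insert b I))"
      using nm maxinI[OF I(2) I(1)] by blast
    then show ?thesis using that by blast
  qed
  have KI: "K \<subseteq> span E ind I"
  proof
    fix b assume b: "b \<in> K"
    show "b \<in> span E ind I"
    proof (cases "b \<in> I")
      case True then show ?thesis using span_sup by blast
    next
      case False
      then have "\<not> ind (insert b I)" using no b by blast
      moreover have "b \<in> E" using b maxinD(1)[OF K] X by blast
      ultimately show ?thesis using span_ind[OF I(1)] by blast
    qed
  qed
  have "z \<in> span E ind K"
  proof (cases "z \<in> K")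
    case True then show ?thesis using span_sup by blast
  next
    case False
    then show ?thesis using maxinD(3)[OF K z(1)] span_ind[OF maxinD(2)[OF K]] z(1) X by blast
  qed
  then have "z \<in> span E ind I" using span_trans[OF I(1) KI] by blast
  then show False using span_ind[OF I(1)] z by blast
qed

lemma restr_matroid: assumes X: "X \<subseteq> E" shows "matroid X (restr X ind)"
proof -
  have bb: "base X (restr X ind) B \<longleftrightarrow> maxin ind X B" for B
    unfolding base_def maxin_def restr_def by blast
  show ?thesis unfolding matroid_def
  proof (intro conjI allI impI)
    show "restr X ind {}" unfolding restr_def using ind_empty by blast
  next
    fix I assume "restr X ind I" then show "I \<subseteq> X" unfolding restr_def by blast
  next
    fix I J assume "restr X ind J \<and> I \<subseteq> J" then show "restr X ind I" unfolding restr_def using ind_sub by blast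
  next
    fix I B assume a: "restr X ind I \<and> \<not> base X (restr X ind) I \<and> base X (restr X ind) B"
    then have "ind I" "I \<subseteq> X" "\<not> maxin ind X I" "maxin ind X B" unfolding bb unfolding restr_def by blast+
    then obtain b where "b \<in> B - I" "ind (insert b I)" using rel_I3[OF X] by blast
    moreover have "insert b I \<subseteq> X" using \<open>b \<in> B - I\<close> \<open>I \<subseteq> X\<close> maxinD(1)[OF \<open>maxin ind X B\<close>] by blast
    ultimately show "\<exists>x\<in>B - I. restr X ind (insert x I)" unfolding restr_def by blast
  next
    fix I Y assume a: "restr X ind I \<and> I \<subseteq> Y \<and> Y \<subseteq> X"
    then have "ind I" "I \<subseteq> Y" "Y \<subseteq> E" unfolding restr_def using X by blast+
    then obtain J where J: "I \<subseteq> J" "maxin ind Y J" using maxin_ex by blast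
    have J2: "J \<subseteq> Y" "ind J" "\<forall>K. ind K \<and> J \<subseteq> K \<and> K \<subseteq> Y \<longrightarrow> K = J"
      using J(2) unfolding maxin_def by blast+
    have "restr X ind J" unfolding restr_def using J2(1,2) a by blast
    moreover have "\<forall>K. restr X ind K \<and> J \<subseteq> K \<and> K \<subseteq> Y \<longrightarrow> K = J"
      unfolding restr_def using J2(3) by blast
    ultimately show "\<exists>J. I \<subseteq> J \<and> J \<subseteq> Y \<and> restr X ind J \<and>
      (\<forall>K. restr X ind K \<and> J \<subseteq> K \<and> K \<subseteq> Y \<longrightarrow> K = J)"
      using J(1) J2(1) by blast
  qed
qed

end


context mat begin

lemma dualI: "X \<subseteq> E \<Longrightarrow> base E ind B \<Longrightarrow> X \<inter> B = {} \<Longrightarrow> dual E ind X"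
  unfolding dual_def by blast

lemma dualD: "dual E ind X \<Longrightarrow> X \<subseteq> E \<and> (\<exists>B. base E ind B \<and> X \<inter> B = {})"
  unfolding dual_def by blast

lemma base_compl: assumes "base E ind B" shows "base E (dual E ind) (E - B)"
proof -
  have d: "dual E ind (E - B)" using dualI[OF _ assms] by blast
  have m: "K = E - B" if K: "dual E ind K" "K \<subseteq> E" "E - B \<subseteq> K" for K
  proof -
    obtain B' where B': "base E ind B'" "K \<inter> B' = {}" using dualD[OF K(1)] by blast
    have "B' \<subseteq> B" using B' K(3) baseD(2)[OF B'(1)] by blast
    then have "B = B'" using baseD(3)[OF B'(1) baseD(1,2)[OF assms]] by blast
    then show ?thesis using B' K by blast
  qed
  show ?thesis unfolding base_def using d m by blast
qed

lemma base_dual: "base E (dual E ind) D \<longleftrightarrow> (\<exists>B. base E ind B \<and> D = E - B)"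
proof
  assume D: "base E (dual E ind) D"
  then have "dual E ind D" unfolding base_def by blast
  then obtain B where B: "base E ind B" "D \<inter> B = {}" "D \<subseteq> E" using dualD by blast
  have "D \<subseteq> E - B" using B by blast
  moreover have "dual E ind (E - B)" using dualI[OF _ B(1)] by blast
  ultimately have "E - B = D" using D unfolding base_def by blast
  then show "\<exists>B. base E ind B \<and> D = E - B" using B(1) by blast
next
  assume "\<exists>B. base E ind B \<and> D = E - B"
  then show "base E (dual E ind) D" using base_compl by blast
qed

lemma dual_dual: "dual E (dual E ind) X \<longleftrightarrow> ind X"
proof
  assume "dual E (dual E ind) X"
  then obtain D where D: "X \<subseteq> E" "base E (dual E ind) D" "X \<inter> D = {}" unfolding dual_def by blast
  then obtain B where B: "base E ind B" "D = E - B" using base_dual by blast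
  then have "X \<subseteq> B" using D by blast
  then show "ind X" using baseD(1)[OF B(1)] ind_sub by blast
next
  assume X: "ind X"
  obtain B where B: "base E ind B" "X \<subseteq> B" using base_ext[OF X] by blast
  have "base E (dual E ind) (E - B)" using base_compl[OF B(1)] .
  moreover have "X \<inter> (E - B) = {}" using B(2) by blast
  ultimately show "dual E (dual E ind) X" unfolding dual_def using subE[OF X] by blast
qed

lemma dual_dual_eq: "dual E (dual E ind) = ind"
  using dual_dual by blast

lemma dual_I3: assumes I: "dual E ind I" and nb: "\<not> base E (dual E ind) I"
  and D: "base E (dual E ind) D" shows "\<exists>x\<in>D - I. dual E ind (insert x I)"
proof -
  obtain B1 where B1: "base E ind B1" "D = E - B1" using D base_dual by blast
  have IE: "I \<subseteq> E" using dualD[OF I] by blast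
  have "\<not> (\<forall>K. dual E ind K \<and> K \<subseteq> E \<and> I \<subseteq> K \<longrightarrow> K = I)"
    using nb I IE unfolding base_def by blast
  then obtain K where K: "dual E ind K" "K \<subseteq> E" "I \<subseteq> K" "K \<noteq> I"
    by blast
  obtain z where z: "z \<in> K" "z \<notin> I" using K(3,4) by blast
  obtain B2 where B2: "base E ind B2" "K \<inter> B2 = {}" using dualD[OF K(1)] by blast
  have zE: "z \<in> E" using z K(2) by blast
  have zB2: "z \<notin> B2" using z B2 by blast
  have IB2: "I \<inter> B2 = {}" using K(3) B2(2) by blast
  show ?thesis
  proof (cases "z \<in> B1")
    case False
    have s1: "insert z I \<subseteq> E" using IE zE by blast
    have s2: "insert z I \<inter> B2 = {}" using zB2 IB2 by auto
    have "dual E ind (insert z I)" using dualI[OF s1 B2(1) s2] .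
    then show ?thesis using z zE False B1(2) by blast
  next
    case True
    note B2d = baseD[OF B2(1)]
    have dep: "\<not> ind (insert z B2)"
    proof
      assume "ind (insert z B2)"
      moreover have "B2 \<subset> insert z B2" using zB2 by blast
      moreover have "insert z B2 \<subseteq> E" using zE B2d(2) by blast
      ultimately show False using base_psub[OF B2(1)] by blast
    qed
    note C = fc[OF B2d(1) zE zB2 dep]
    have "\<not> fcirc E ind z B2 \<subseteq> B1"
      using C(1) circD(2) ind_sub baseD(1)[OF B1(1)] by blast
    then obtain r where r: "r \<in> fcirc E ind z B2" "r \<notin> B1" by blast
    have rz: "r \<noteq> z" using r True by blast
    have rB2: "r \<in> B2" using r rz C(2) by blast
    have i: "ind (insert z (B2 - {r}))" using exch_ind[OF B2d(1) zE zB2 dep r(1) rz] .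
    have b: "base E ind (insert z (B2 - {r}))" using exch_base[OF B2(1) rB2 zB2 i] .
    have rE: "r \<in> E" using rB2 B2d(2) by blast
    have s2: "insert r I \<inter> insert z (B2 - {r}) = {}" using IB2 z rz by auto
    have s1: "insert r I \<subseteq> E" using IE rE by blast
    have "dual E ind (insert r I)" using dualI[OF s1 b s2] .
    moreover have "r \<notin> I" using IB2 rB2 by auto
    moreover have "r \<in> D" using B1(2) rE r(2) by blast
    ultimately show ?thesis by blast
  qed
qed

lemma dual_IM: assumes I: "dual E ind I" and IX: "I \<subseteq> X" and X: "X \<subseteq> E"
  shows "\<exists>J. I \<subseteq> J \<and> J \<subseteq> X \<and> dual E ind J \<and> (\<forall>K. dual E ind K \<and> J \<subseteq> K \<and> K \<subseteq> X \<longrightarrow> K = J)"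
proof -
  obtain B0 where B0: "base E ind B0" "I \<inter> B0 = {}" using dualD[OF I] by blast
  have IB0: "\<And>a. a \<in> I \<Longrightarrow> a \<notin> B0" using B0(2) by auto
  note B0d = baseD[OF B0(1)]
  have i1: "ind (B0 - X)" using B0d(1) ind_sub by blast
  have s1: "B0 - X \<subseteq> E - X" using B0d(2) by blast
  have s2: "E - X \<subseteq> E" by blast
  obtain L where L: "B0 - X \<subseteq> L" "maxin ind (E - X) L"
    using maxin_ex[OF i1 s1 s2] by blast
  note Ld = maxinD[OF L(2)]
  have LB0: "L \<subseteq> L \<union> B0" "L \<union> B0 \<subseteq> E" using Ld(1) B0d(2) by blast+
  obtain B where B: "L \<subseteq> B" "maxin ind (L \<union> B0) B" using maxin_ex[OF Ld(2) LB0] by blast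
  note Bd = maxinD[OF B(2)]
  have B0LB: "B0 \<subseteq> L \<union> B0" by blast
  have bB: "base E ind B"
    using maxin_base[OF B0(1) B0LB, of B] B(2) unfolding maxin_def by blast
  define J where "J = X - B"
  have Jm: "a \<in> J \<longleftrightarrow> a \<in> X \<and> a \<notin> B" for a unfolding J_def by blast
  have IJ: "I \<subseteq> J"
  proof
    fix a assume a: "a \<in> I"
    have "a \<notin> B0" using IB0 a by blast
    moreover have "a \<notin> L" using a IX Ld(1) by blast
    ultimately have "a \<notin> B" using Bd(1) by blast
    then show "a \<in> J" using Jm a IX by blast
  qed
  have JX: "J \<subseteq> X" using Jm by blast
  have JB: "J \<inter> B = {}" using Jm by blast
  have dJ: "dual E ind J" using dualI[OF _ bB JB] JX X by blast
  have mx: "K = J" if K: "dual E ind K" "J \<subseteq> K" "K \<subseteq> X" for K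
  proof (rule ccontr)
    assume "K \<noteq> J"
    then obtain z where z: "z \<in> K" "z \<notin> J" using K(2) by blast
    have zB: "z \<in> B" using z K(3) Jm by blast
    obtain B' where B': "base E ind B'" "K \<inter> B' = {}" using dualD[OF K(1)] by blast
    have KB': "\<And>a. a \<in> B' \<Longrightarrow> a \<notin> K" using B'(2) by auto
    note B'd = baseD[OF B'(1)]
    define A where "A = L \<union> (B' \<inter> X)"
    have Am: "a \<in> A \<longleftrightarrow> a \<in> L \<or> (a \<in> B' \<and> a \<in> X)" for a unfolding A_def by blast
    have AB: "A \<subseteq> B - {z}"
    proof
      fix a assume a: "a \<in> A"
      show "a \<in> B - {z}"
      proof (cases "a \<in> L")
        case True
        then have "a \<in> B" using B(1) by blast
        moreover have "a \<noteq> z" using True Ld(1) z(1) K(3) by blast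
        ultimately show ?thesis by blast
      next
        case False
        then have aB': "a \<in> B'" "a \<in> X" using a Am by blast+
        then have "a \<notin> K" using KB' by blast
        then have "a \<notin> J" "a \<noteq> z" using K(2) z(1) by blast+
        then show ?thesis using aB' Jm by blast
      qed
    qed
    have iA: "ind A" using AB Bd(2) ind_sub by blast
    have bA: "base E ind A"
    proof (rule ccontr)
      assume "\<not> base E ind A"
      then obtain b where b: "b \<in> B' - A" "ind (insert b A)" using I3[OF iA _ B'(1)] by blast
      have bE: "b \<in> E" using b B'd(2) by blast
      have bnX: "b \<notin> X" using b Am by blast
      have bL: "b \<notin> L" using b Am by blast
      have "insert b L \<subseteq> insert b A" using Am by blast
      then have "ind (insert b L)" using b(2) ind_sub by blast
      moreover have "b \<in> E - X" using bE bnX by blast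
      ultimately show False using Ld(3) bL by blast
    qed
    have "B = A" using baseD(3)[OF bA baseD(1)[OF bB] baseD(2)[OF bB]] AB by blast
    then show False using AB zB by blast
  qed
  show ?thesis using IJ dJ mx JX by blast
qed

lemma dual_matroid: "matroid E (dual E ind)"
  unfolding matroid_def
proof (intro conjI allI impI)
  show "dual E ind {}" using base_ex dualI by blast
next
  fix I assume "dual E ind I" then show "I \<subseteq> E" using dualD by blast
next
  fix I J assume a: "dual E ind J \<and> I \<subseteq> J"
  then obtain B where "base E ind B" "J \<inter> B = {}" "J \<subseteq> E" using dualD by blast
  then show "dual E ind I" using a dualI[of I B] by blast
next
  fix I B assume "dual E ind I \<and> \<not> base E (dual E ind) I \<and> base E (dual E ind) B"
  then show "\<exists>x\<in>B - I. dual E ind (insert x I)" using dual_I3 by blast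
next
  fix I X assume "dual E ind I \<and> I \<subseteq> X \<and> X \<subseteq> E"
  then show "\<exists>J. I \<subseteq> J \<and> J \<subseteq> X \<and> dual E ind J \<and> (\<forall>K. dual E ind K \<and> J \<subseteq> K \<and> K \<subseteq> X \<longrightarrow> K = J)"
    using dual_IM by blast
qed

end

lemma mat_dual: "mat E ind \<Longrightarrow> mat E (dual E ind)"
  using mat.dual_matroid mat.intro by blast

lemma mat_restr: "mat E ind \<Longrightarrow> X \<subseteq> E \<Longrightarrow> mat X (restr X ind)"
  using mat.restr_matroid mat.intro by blast


definition crel :: "'a set \<Rightarrow> ('a set \<Rightarrow> bool) \<Rightarrow> 'a \<Rightarrow> 'a \<Rightarrow> bool" where
  "crel E ind x y \<longleftrightarrow> x = y \<or> (\<exists>C. circuit E ind C \<and> x \<in> C \<and> y \<in> C)"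

definition sep :: "'a set \<Rightarrow> ('a set \<Rightarrow> bool) \<Rightarrow> 'a set \<Rightarrow> bool" where
  "sep E ind Y \<longleftrightarrow> Y \<subseteq> E \<and> (\<forall>X. ind X \<longleftrightarrow> X \<subseteq> E \<and> ind (X \<inter> Y) \<and> ind (X - Y))"

context mat begin

lemma circ_trans: assumes C: "circuit E ind C" "x \<in> C" "y \<in> C" and D: "circuit E ind D" "y \<in> D" "z \<in> D"
  shows "\<exists>F. circuit E ind F \<and> x \<in> F \<and> z \<in> F"
proof (cases "z \<in> C \<or> x \<in> D")
  case True then show ?thesis using C D by blast
next
  case False
  then have zC: "z \<notin> C" and xD: "x \<notin> D" by blast+
  have xy: "x \<noteq> y" using xD D(2) by blast
  have xz: "x \<noteq> z" using zC C(2) by blast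
  note Cd = circD[OF C(1)] and Dd = circD[OF D(1)]
  define X0 where "X0 = (C \<union> D) - {z}"
  have X0E: "X0 \<subseteq> E" using Cd(1) Dd(1) X0_def by blast
  have iCx: "ind (C - {x})" using circ_del[OF C(1,2)] .
  have CxX0: "C - {x} \<subseteq> X0" using zC X0_def by blast
  obtain L where L: "C - {x} \<subseteq> L" "maxin ind X0 L" using maxin_ex[OF iCx CxX0 X0E] by blast
  note Ld = maxinD[OF L(2)]
  have xL: "x \<notin> L"
  proof
    assume "x \<in> L"
    then have "C \<subseteq> L" using L(1) by blast
    then show False using Ld(2) ind_sub Cd(2) by blast
  qed
  have X0span: "X0 \<subseteq> span E ind L"
  proof
    fix a assume a: "a \<in> X0"
    show "a \<in> span E ind L"
    proof (cases "a \<in> L")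
      case True then show ?thesis using span_sup by blast
    next
      case False then show ?thesis using Ld(3)[OF a False] span_ind[OF Ld(2)] a X0E by blast
    qed
  qed
  have zE: "z \<in> E" using Dd(1) D(3) by blast
  have iDz: "ind (D - {z})" using circ_del[OF D(1,3)] .
  have "\<not> ind (insert z (D - {z}))" using Dd(2) D(3) by (simp add: insert_absorb)
  then have "z \<in> span E ind (D - {z})" using span_ind[OF iDz] zE by blast
  moreover have "D - {z} \<subseteq> span E ind L" using X0span X0_def by blast
  ultimately have "z \<in> span E ind L" using span_trans[OF Ld(2)] by blast
  moreover have zL: "z \<notin> L" using Ld(1) X0_def by blast
  ultimately have depz: "\<not> ind (insert z L)" using span_ind[OF Ld(2)] by blast
  note D' = fc[OF Ld(2) zE zL depz]
  have xE: "x \<in> E" using Cd(1) C(2) by blast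
  have CxL: "C \<subseteq> insert x L" using L(1) by blast
  have depx: "\<not> ind (insert x L)" using CxL ind_sub Cd(2) by blast
  have Cfc: "C = fcirc E ind x L" using fc(4)[OF Ld(2) xE xL depx C(1) CxL] .
  show ?thesis
  proof (cases "\<exists>w. w \<in> fcirc E ind z L \<and> w \<in> C \<and> w \<noteq> x")
    case True
    then obtain w where w: "w \<in> fcirc E ind z L" "w \<in> C" "w \<noteq> x" by blast
    have wz: "w \<noteq> z" using w zC by blast
    let ?L' = "insert z (L - {w})"
    have iL': "ind ?L'" using exch_ind[OF Ld(2) zE zL depz w(1) wz] .
    have spL': "span E ind ?L' = span E ind L" using exch_span[OF Ld(2) zE zL depz w(1) wz] .
    have xL': "x \<notin> ?L'" using xL xz by blast
    have "x \<in> span E ind L" using span_ind[OF Ld(2)] xE depx by blast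
    then have depx': "\<not> ind (insert x ?L')" using spL' span_ind[OF iL'] xL' by blast
    note F = fc[OF iL' xE xL' depx']
    have "z \<in> fcirc E ind x ?L'"
    proof (rule ccontr)
      assume "z \<notin> fcirc E ind x ?L'"
      then have sub: "fcirc E ind x ?L' \<subseteq> insert x L" using F(2) by blast
      have "fcirc E ind x ?L' = C" using fc(4)[OF Ld(2) xE xL depx F(1) sub] Cfc by simp
      then have "w \<in> insert x (L - {w})" using w(2) F(2) wz by blast
      then show False using w(3) by blast
    qed
    then show ?thesis using F(1,3) by blast
  next
    case False
    have sub: "fcirc E ind z L \<subseteq> D"
    proof
      fix a assume a: "a \<in> fcirc E ind z L"
      show "a \<in> D"
      proof (cases "a = z")
        case True then show ?thesis using D(3) by simp
      next
        case False
        then have "a \<in> L" using a D'(2) by blast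
        then have "a \<in> X0" "a \<noteq> x" using Ld(1) xL by blast+
        moreover have "a \<notin> C" using \<open>\<not> (\<exists>w. w \<in> fcirc E ind z L \<and> w \<in> C \<and> w \<noteq> x)\<close> a \<open>a \<noteq> x\<close> by blast
        ultimately show ?thesis using X0_def by blast
      qed
    qed
    have "y \<notin> fcirc E ind z L" using False C(3) xy by blast
    then have "fcirc E ind z L \<subset> D" using sub D(2) by blast
    then show ?thesis using Dd(3) circD(2)[OF D'(1)] by blast
  qed
qed

lemma crel_trans: "crel E ind x y \<Longrightarrow> crel E ind y z \<Longrightarrow> crel E ind x z"
  unfolding crel_def using circ_trans by metis

lemma crel_sym: "crel E ind x y \<Longrightarrow> crel E ind y x"
  unfolding crel_def by blast

lemma component_crel: "component E ind x = {y \<in> E. crel E ind x y}"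
  unfolding component_def crel_def by blast

lemma E0_circ: assumes C: "circuit E ind C" and c: "c \<in> C" "c \<in> E0 E ind" shows "C \<subseteq> E0 E ind"
proof
  fix d assume d: "d \<in> C"
  obtain z where z: "z \<in> E" "finitary (component E ind z) (restr (component E ind z) ind)"
     "c \<in> component E ind z"
    using c(2) unfolding E0_def by blast
  have "crel E ind z c" using z(3) component_crel by blast
  moreover have "crel E ind c d" using C c(1) d unfolding crel_def by blast
  ultimately have "crel E ind z d" using crel_trans by blast
  moreover have "d \<in> E" using circD(1)[OF C] d by blast
  ultimately have "d \<in> component E ind z" using component_crel by blast
  then show "d \<in> E0 E ind" using z(1,2) unfolding E0_def by blast
qed

lemma E0_sub: "E0 E ind \<subseteq> E"
proof
  fix a assume "a \<in> E0 E ind"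
  then obtain z where "a \<in> component E ind z" unfolding E0_def by blast
  then show "a \<in> E" unfolding component_def by blast
qed

lemma sep_intro: assumes Y: "Y \<subseteq> E" and c: "\<And>C. circuit E ind C \<Longrightarrow> C \<subseteq> Y \<or> C \<inter> Y = {}"
  shows "sep E ind Y"
  unfolding sep_def
proof (intro conjI allI)
  show "Y \<subseteq> E" using Y .
  fix X
  show "ind X \<longleftrightarrow> X \<subseteq> E \<and> ind (X \<inter> Y) \<and> ind (X - Y)"
  proof
    assume iX: "ind X"
    have "ind (X \<inter> Y)" using ind_sub[OF iX] by blast
    moreover have "ind (X - Y)" using ind_sub[OF iX] by blast
    ultimately show "X \<subseteq> E \<and> ind (X \<inter> Y) \<and> ind (X - Y)" using subE[OF iX] by blast
  next
    assume a: "X \<subseteq> E \<and> ind (X \<inter> Y) \<and> ind (X - Y)"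
    show "ind X"
    proof (rule ccontr)
      assume "\<not> ind X"
      then obtain C where C: "circuit E ind C" "C \<subseteq> X" using dep_circ a by blast
      have "\<not> ind C" using circD(2)[OF C(1)] .
      moreover from c[OF C(1)] have "C \<subseteq> X \<inter> Y \<or> C \<subseteq> X - Y" using C(2) by blast
      ultimately show False using a ind_sub by blast
    qed
  qed
qed

lemma sep_E0: "sep E ind (E0 E ind)"
proof (rule sep_intro[OF E0_sub])
  fix C assume C: "circuit E ind C"
  show "C \<subseteq> E0 E ind \<or> C \<inter> E0 E ind = {}"
  proof (cases "C \<inter> E0 E ind = {}")
    case False
    then obtain c where "c \<in> C" "c \<in> E0 E ind" by blast
    then show ?thesis using E0_circ[OF C] by blast
  qed simp
qed

lemma sepD: "sep E ind Y \<Longrightarrow> ind X \<longleftrightarrow> X \<subseteq> E \<and> ind (X \<inter> Y) \<and> ind (X - Y)"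
  unfolding sep_def by blast

lemma sep_dual: assumes s: "sep E ind Y" shows "sep E (dual E ind) Y"
  unfolding sep_def
proof (intro conjI allI)
  show "Y \<subseteq> E" using s unfolding sep_def by blast
  fix X
  show "dual E ind X \<longleftrightarrow> X \<subseteq> E \<and> dual E ind (X \<inter> Y) \<and> dual E ind (X - Y)"
  proof
    assume "dual E ind X"
    then show "X \<subseteq> E \<and> dual E ind (X \<inter> Y) \<and> dual E ind (X - Y)"
      using mat.ind_sub[OF mat_dual[OF mat_axioms]] dualD by blast
  next
    assume a: "X \<subseteq> E \<and> dual E ind (X \<inter> Y) \<and> dual E ind (X - Y)"
    obtain B0 where B0: "base E ind B0" "(X \<inter> Y) \<inter> B0 = {}" using a dualD by blast
    obtain B1 where B1: "base E ind B1" "(X - Y) \<inter> B1 = {}" using a dualD by blast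
    define B where "B = (B0 \<inter> Y) \<union> (B1 - Y)"
    have BY: "B \<inter> Y = B0 \<inter> Y" "B - Y = B1 - Y" unfolding B_def by blast+
    have BE: "B \<subseteq> E" using baseD(2)[OF B0(1)] baseD(2)[OF B1(1)] B_def by blast
    have iB: "ind B" using sepD[OF s, of B] BE BY baseD(1)[OF B0(1)] baseD(1)[OF B1(1)] ind_sub
      by (metis Diff_subset inf_le1)
    have bB: "base E ind B" unfolding base_def
    proof (intro conjI allI impI)
      fix K assume K: "ind K \<and> K \<subseteq> E \<and> B \<subseteq> K"
      show "K = B"
      proof (rule ccontr)
        assume "K \<noteq> B"
        then obtain e where e: "e \<in> K" "e \<notin> B" using K by blast
        show False
        proof (cases "e \<in> Y")
          case True
          have eB0: "e \<notin> B0" using e True BY by blast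
          have "insert e B0 \<inter> Y \<subseteq> K \<inter> Y" using K BY e True by blast
          then have i1: "ind (insert e B0 \<inter> Y)" using K ind_sub by (meson inf_le1 subset_trans)
          have i2: "ind (insert e B0 - Y)" using baseD(1)[OF B0(1)] ind_sub True by (metis Diff_subset insert_Diff_if)
          have "insert e B0 \<subseteq> E" using K e baseD(2)[OF B0(1)] by blast
          then have "ind (insert e B0)" using sepD[OF s] i1 i2 by blast
          moreover have "B0 \<subset> insert e B0" using eB0 by blast
          moreover have "insert e B0 \<subseteq> E" using K e baseD(2)[OF B0(1)] by blast
          ultimately show False using base_psub[OF B1(1)] base_psub[OF B0(1)] by blast
        next
          case False
          have eB1: "e \<notin> B1" using e False BY by blast
          have "insert e B1 - Y \<subseteq> K - Y" using K BY e False by blast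
          then have i1: "ind (insert e B1 - Y)" using K ind_sub by (meson Diff_subset subset_trans)
          have i2: "ind (insert e B1 \<inter> Y)" using baseD(1)[OF B1(1)] ind_sub False by (metis inf_le1 insert_inter_insert inf.absorb_iff2 Int_insert_left)
          have "insert e B1 \<subseteq> E" using K e baseD(2)[OF B1(1)] by blast
          then have "ind (insert e B1)" using sepD[OF s] i1 i2 by blast
          moreover have "B1 \<subset> insert e B1" using eB1 by blast
          moreover have "insert e B1 \<subseteq> E" using K e baseD(2)[OF B1(1)] by blast
          ultimately show False using base_psub[OF B1(1)] by blast
        qed
      qed
    qed (use iB BE in blast)+
    have "X \<inter> B = {}" using B0(2) B1(2) B_def by blast
    then show "dual E ind X" using dualI[OF _ bB] a by blast
  qed
qed

lemma sep_ins: assumes s: "sep E ind Y" and F: "ind F" and e: "e \<in> Y"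
  shows "ind (insert e F) \<longleftrightarrow> ind (insert e (F \<inter> Y))"
proof -
  have YE: "Y \<subseteq> E" using s unfolding sep_def by blast
  have FE: "F \<subseteq> E" using subE[OF F] .
  have sub: "insert e F \<subseteq> E" using FE YE e by blast
  have eq1: "insert e F \<inter> Y = insert e (F \<inter> Y)" using e by blast
  have eq2: "insert e F - Y = F - Y" using e by blast
  have s1: "ind (insert e F) = (ind (insert e (F \<inter> Y)) \<and> ind (F - Y))"
    using sepD[OF s, of "insert e F"] sub unfolding eq1 eq2 by simp
  have "ind (F - Y)" using ind_sub[OF F] by blast
  then show ?thesis using s1 by blast
qed

lemma sep_compl: assumes s: "sep E ind Y" shows "sep E ind (E - Y)"
  unfolding sep_def
proof (intro conjI allI)
  show "E - Y \<subseteq> E" by blast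
  fix X
  have "X \<subseteq> E \<Longrightarrow> X \<inter> (E - Y) = X - Y" "X \<subseteq> E \<Longrightarrow> X - (E - Y) = X \<inter> Y" by blast+
  then show "ind X \<longleftrightarrow> X \<subseteq> E \<and> ind (X \<inter> (E - Y)) \<and> ind (X - (E - Y))"
    using sepD[OF s, of X] by auto
qed

end


context mat begin

lemma bx: assumes "ind J"
  and "\<forall>k<length ps. fst (ps!k) \<in> E \<and> fst (ps!k) \<notin> J \<and> snd (ps!k) \<in> J \<and>
        \<not> ind (insert (fst (ps!k)) J) \<and> snd (ps!k) \<in> fcirc E ind (fst (ps!k)) J"
  and "distinct (map fst ps @ map snd ps)"
  and "\<forall>i j. i < j \<and> j < length ps \<longrightarrow> snd (ps!j) \<notin> fcirc E ind (fst (ps!i)) J"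
  shows "ind ((J - snd ` set ps) \<union> fst ` set ps) \<and> span E ind ((J - snd ` set ps) \<union> fst ` set ps) = span E ind J"
  using assms
proof (induction ps arbitrary: J rule: rev_induct)
  case Nil then show ?case by simp
next
  case (snoc p ps)
  obtain a b where p: "p = (a, b)" by (cases p)
  let ?n = "length ps"
  have hp: "a \<in> E" "a \<notin> J" "b \<in> J" "\<not> ind (insert a J)" "b \<in> fcirc E ind a J"
    using snoc.prems(2)[rule_format, of ?n] p by (simp_all add: nth_append)
  have dist: "distinct (map fst ps @ map snd ps)" "a \<notin> fst ` set ps" "b \<notin> snd ` set ps"
    "a \<notin> snd ` set ps" "b \<notin> fst ` set ps" "a \<noteq> b"
    using snoc.prems(3) p by auto
  have ab: "b \<noteq> a" using dist(6) by simp
  let ?J1 = "insert a (J - {b})"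
  have iJ1: "ind ?J1" using exch_ind[OF snoc.prems(1) hp(1,2,4,5) ab] .
  have sJ1: "span E ind ?J1 = span E ind J" using exch_span[OF snoc.prems(1) hp(1,2,4,5) ab] .
  have nth: "(ps @ [p]) ! k = ps ! k" if "k < ?n" for k using that by (simp add: nth_append)
  have hk: "fst (ps!k) \<in> E \<and> fst (ps!k) \<notin> J \<and> snd (ps!k) \<in> J \<and>
        \<not> ind (insert (fst (ps!k)) J) \<and> snd (ps!k) \<in> fcirc E ind (fst (ps!k)) J" if "k < ?n" for k
    using snoc.prems(2)[rule_format, of k] that nth[OF that] by simp
  have bnot: "b \<notin> fcirc E ind (fst (ps!k)) J" if "k < ?n" for k
    using snoc.prems(4)[rule_format, of k ?n] that nth[OF that] p by simp
  have fceq: "fcirc E ind (fst (ps!k)) ?J1 = fcirc E ind (fst (ps!k)) J"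
    and dep1: "\<not> ind (insert (fst (ps!k)) ?J1)"
    and notin1: "fst (ps!k) \<notin> ?J1"
    if k: "k < ?n" for k
  proof -
    let ?x = "fst (ps!k)"
    have inset: "ps!k \<in> set ps" using k by simp
    have xa: "?x \<noteq> a" using dist(2) inset by force
    show notin: "?x \<notin> ?J1" using hk[OF k] xa by blast
    note C = fc[OF snoc.prems(1), of ?x] hk[OF k]
    have Cc: "circuit E ind (fcirc E ind ?x J)" "fcirc E ind ?x J \<subseteq> insert ?x J"
      using fc(1,2)[OF snoc.prems(1)] hk[OF k] by blast+
    have sub: "fcirc E ind ?x J \<subseteq> insert ?x ?J1" using Cc(2) bnot[OF k] by blast
    show dep: "\<not> ind (insert ?x ?J1)" using sub ind_sub circD(2)[OF Cc(1)] by blast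
    show "fcirc E ind ?x ?J1 = fcirc E ind ?x J"
      using fc(4)[OF iJ1 _ notin dep Cc(1) sub] hk[OF k] by simp
  qed
  have IH: "ind ((?J1 - snd ` set ps) \<union> fst ` set ps) \<and>
      span E ind ((?J1 - snd ` set ps) \<union> fst ` set ps) = span E ind ?J1"
  proof (rule snoc.IH[OF iJ1])
    show "\<forall>k<?n. fst (ps!k) \<in> E \<and> fst (ps!k) \<notin> ?J1 \<and> snd (ps!k) \<in> ?J1 \<and>
        \<not> ind (insert (fst (ps!k)) ?J1) \<and> snd (ps!k) \<in> fcirc E ind (fst (ps!k)) ?J1"
    proof (intro allI impI)
      fix k assume k: "k < ?n"
      have inset: "ps!k \<in> set ps" using k by simp
      have "snd (ps!k) \<noteq> b" using dist(3) inset by force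
      then show "fst (ps!k) \<in> E \<and> fst (ps!k) \<notin> ?J1 \<and> snd (ps!k) \<in> ?J1 \<and>
        \<not> ind (insert (fst (ps!k)) ?J1) \<and> snd (ps!k) \<in> fcirc E ind (fst (ps!k)) ?J1"
        using hk[OF k] fceq[OF k] dep1[OF k] notin1[OF k] by blast
    qed
    show "distinct (map fst ps @ map snd ps)" using dist(1) .
    show "\<forall>i j. i < j \<and> j < ?n \<longrightarrow> snd (ps!j) \<notin> fcirc E ind (fst (ps!i)) ?J1"
    proof (intro allI impI)
      fix i j assume ij: "i < j \<and> j < ?n"
      then have "snd (ps!j) \<notin> fcirc E ind (fst (ps!i)) J"
        using snoc.prems(4)[rule_format, of i j] nth[of i] nth[of j] by simp
      then show "snd (ps!j) \<notin> fcirc E ind (fst (ps!i)) ?J1" using fceq[of i] ij by simp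
    qed
  qed
  have seteq: "(?J1 - snd ` set ps) \<union> fst ` set ps = (J - snd ` set (ps @ [p])) \<union> fst ` set (ps @ [p])"
    using p dist(4) by auto
  show ?case using IH seteq sJ1 by simp
qed

end

lemma restr_base: "base X (restr X ind) B \<longleftrightarrow> maxin ind X B"
  unfolding base_def maxin_def restr_def by blast

context mat begin
lemma bx_rev: assumes "ind J"
  and "\<forall>k<length ps. fst (ps!k) \<in> E \<and> fst (ps!k) \<notin> J \<and> snd (ps!k) \<in> J \<and>
        \<not> ind (insert (fst (ps!k)) J) \<and> snd (ps!k) \<in> fcirc E ind (fst (ps!k)) J"
  and "distinct (map fst ps @ map snd ps)"
  and "\<forall>i j. i < j \<and> j < length ps \<longrightarrow> snd (ps!i) \<notin> fcirc E ind (fst (ps!j)) J"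
  shows "ind ((J - snd ` set ps) \<union> fst ` set ps) \<and> span E ind ((J - snd ` set ps) \<union> fst ` set ps) = span E ind J"
proof -
  let ?n = "length ps"
  have r: "rev ps ! k = ps ! (?n - Suc k)" if "k < ?n" for k using that by (simp add: rev_nth)
  have "ind ((J - snd ` set (rev ps)) \<union> fst ` set (rev ps)) \<and>
     span E ind ((J - snd ` set (rev ps)) \<union> fst ` set (rev ps)) = span E ind J"
  proof (rule bx[OF assms(1)])
    show "\<forall>k<length (rev ps). fst (rev ps!k) \<in> E \<and> fst (rev ps!k) \<notin> J \<and> snd (rev ps!k) \<in> J \<and>
        \<not> ind (insert (fst (rev ps!k)) J) \<and> snd (rev ps!k) \<in> fcirc E ind (fst (rev ps!k)) J"
    proof (intro allI impI)
      fix k assume k: "k < length (rev ps)"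
      then have "?n - Suc k < ?n" by simp
      then show "fst (rev ps!k) \<in> E \<and> fst (rev ps!k) \<notin> J \<and> snd (rev ps!k) \<in> J \<and>
        \<not> ind (insert (fst (rev ps!k)) J) \<and> snd (rev ps!k) \<in> fcirc E ind (fst (rev ps!k)) J"
        using assms(2) r k by simp
    qed
    show "distinct (map fst (rev ps) @ map snd (rev ps))" using assms(3) by (simp add: rev_map[symmetric])
    show "\<forall>i j. i < j \<and> j < length (rev ps) \<longrightarrow> snd (rev ps!j) \<notin> fcirc E ind (fst (rev ps!i)) J"
    proof (intro allI impI)
      fix i j assume ij: "i < j \<and> j < length (rev ps)"
      then have "?n - Suc j < ?n - Suc i" "?n - Suc i < ?n" by auto
      then show "snd (rev ps!j) \<notin> fcirc E ind (fst (rev ps!i)) J"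
        using assms(4)[rule_format, of "?n - Suc j" "?n - Suc i"] r ij by simp
    qed
  qed
  then show ?thesis by simp
qed
end

lemma feas_W: assumes mM: "mat E indM" and mN: "mat E indN" and F: "feasible E indM indN I"
  shows "dual E indN (spanring E indM I)"
proof -
  interpret M: mat E indM by (rule mM)
  interpret N: mat E indN by (rule mN)
  have iI: "indM I" "indN I" and cnd: "cond (E - I) (contract E indM I) (contract E indN I)"
    using F unfolding feasible_def by blast+
  define E' where "E' = E - I"
  define W where "W = spanring E indM I"
  define Ms where "Ms = dual E indM"
  define Ns where "Ns = dual E indN"
  have mMs: "mat E Ms" using mat_dual[OF mM] Ms_def by simp
  have mNs: "mat E Ns" using mat_dual[OF mN] Ns_def by simp
  have E'E: "E' \<subseteq> E" using E'_def by blast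
  have mMr: "mat E' (restr E' Ms)" using mat_restr[OF mMs E'E] .
  have mNr: "mat E' (restr E' Ns)" using mat_restr[OF mNs E'E] .
  define M' where "M' = dual E' (restr E' Ms)"
  define N' where "N' = dual E' (restr E' Ns)"
  have cM: "contract E indM I = M'" unfolding contract_def M'_def Ms_def E'_def by simp
  have cN: "contract E indN I = N'" unfolding contract_def N'_def Ns_def E'_def by simp
  have mM': "mat E' M'" using mat_dual[OF mMr] M'_def by simp
  have mN': "mat E' N'" using mat_dual[OF mNr] N'_def by simp
  have cnd': "cond E' M' N'" using cnd cM cN E'_def by simp
  have WE': "W \<subseteq> E'" using M.span_E W_def E'_def unfolding spanring_def by blast
  have key: "K = {}" if K: "M' K" "K \<subseteq> W" for K
  proof (rule ccontr)
    assume "K \<noteq> {}"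
    then obtain k where kK: "k \<in> K" by blast
    obtain D where D: "base E' (restr E' Ms) D" "K \<inter> D = {}" using K(1) M'_def unfolding dual_def by blast
    have mD: "maxin Ms E' D" using D(1) restr_base by blast
    have kW: "k \<in> W" using kK K(2) by blast
    have kD: "k \<notin> D" using kK D(2) by blast
    have kE': "k \<in> E'" using kW WE' by blast
    have DE': "D \<subseteq> E'" using mD unfolding maxin_def by blast
    have dD: "Ms D" using mD unfolding maxin_def by blast
    obtain B0 where B0: "base E indM B0" "D \<inter> B0 = {}" using dD Ms_def unfolding dual_def by blast
    have B0E: "B0 \<subseteq> E" using M.baseD(2)[OF B0(1)] .
    have i0: "indM (B0 - {k})" using M.ind_sub M.baseD(1)[OF B0(1)] by blast
    have s0: "B0 - {k} \<subseteq> E - D - {k}" using B0E B0(2) by blast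
    obtain J where J: "B0 - {k} \<subseteq> J" "maxin indM (E - D - {k}) J"
      using M.maxin_ex[OF i0 s0] by blast
    note Jd = M.maxinD[OF J(2)]
    have bJ: "base E indM J"
    proof (rule ccontr)
      assume "\<not> base E indM J"
      then obtain b where b: "b \<in> B0 - J" "indM (insert b J)" using M.I3[OF Jd(2) _ B0(1)] by blast
      have bD: "b \<notin> D" using b B0(2) by blast
      show False
      proof (cases "b = k")
        case False
        then have "b \<in> E - D - {k}" using b bD B0E by blast
        then show False using Jd(3) b by blast
      next
        case True
        have IJ: "I \<subseteq> span E indM J"
        proof
          fix a assume a: "a \<in> I"
          have aE: "a \<in> E" using M.subE[OF iI(1)] a by blast
          have "a \<notin> D" using a DE' E'_def by blast
          moreover have "a \<noteq> k" using kE' a E'_def by blast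
          ultimately have aX: "a \<in> E - D - {k}" using aE by blast
          show "a \<in> span E indM J"
          proof (cases "a \<in> J")
            case True then show ?thesis using M.span_sup by blast
          next
            case False then show ?thesis using Jd(3)[OF aX False] M.span_ind[OF Jd(2)] aE by blast
          qed
        qed
        have "k \<in> span E indM I" using kW W_def unfolding spanring_def by blast
        then have "k \<in> span E indM J" using M.span_trans[OF Jd(2) IJ] M.span_mono by blast
        moreover have "k \<notin> J" using Jd(1) by blast
        ultimately have "\<not> indM (insert k J)" using M.span_ind[OF Jd(2)] by blast
        then show False using b(2) True by simp
      qed
    qed
    have kDE: "insert k D \<subseteq> E" using kE' DE' E'_def by blast
    have disj: "insert k D \<inter> J = {}" using Jd(1) by blast
    have "Ms (insert k D)" using M.dualI[OF kDE bJ disj] Ms_def by simp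
    moreover have "insert k D \<subseteq> E'" using kE' DE' by blast
    ultimately show False using mat.maxinD(3)[OF mMs mD kE' kD] by blast
  qed
  have ctW: "contract_to E' N' W = dual W (restr W (dual E' N'))"
  proof -
    have "E' - (E' - W) = W" using WE' by blast
    then show ?thesis unfolding contract_to_def contract_def by simp
  qed
  have mdN': "mat E' (dual E' N')" using mat_dual[OF mN'] .
  have mR: "mat W (restr W (dual E' N'))" using mat_restr[OF mdN' WE'] .
  obtain D0 where D0: "base W (restr W (dual E' N')) D0" using mat.base_ex[OF mR] by blast
  have wave: "wave E' M' N' W"
    unfolding wave_def
  proof (intro conjI exI)
    show "W \<subseteq> E'" using WE' .
    show "base W (restr W M') {}" unfolding base_def restr_def
      using key mat.ind_empty[OF mM'] by blast
    show "contract_to E' N' W {}" unfolding ctW using mat.dualI[OF mR _ D0] by blast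
  qed
  obtain B where B: "base W (contract_to E' N' W) B" "M' B" using cnd' wave unfolding cond_def by blast
  have "B \<subseteq> W" using B(1) unfolding base_def by blast
  then have B0: "B = {}" using key B(2) by blast
  have WD: "dual W (restr W (dual E' N')) (W - D0)"
    using mat.dualI[OF mR _ D0] by blast
  have "W - D0 = {}" using B(1) WD B0 unfolding base_def ctW by blast
  then have "W \<subseteq> D0" by blast
  then have "restr W (dual E' N') W" using mat.ind_sub[OF mR] mat.baseD(1)[OF mR D0] by blast
  then have "dual E' N' W" unfolding restr_def by blast
  moreover have "dual E' N' = restr E' Ns" unfolding N'_def using mat.dual_dual_eq[OF mNr] .
  ultimately have "Ns W" unfolding restr_def by simp
  then show ?thesis using Ns_def W_def by simp
qed


lemma arc_unf: "arc E indM indN J x y \<longleftrightarrow> x \<in> E \<and> y \<in> E \<and>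
     ((x \<notin> J \<and> \<not> indM (insert x J) \<and> y \<in> fcirc E indM x J - {x}) \<or>
      (x \<in> J \<inter> E0 E indN \<and> y \<notin> J \<and> \<not> indN (insert y J) \<and> x \<in> fcirc E indN y J) \<or>
      (x \<in> J \<inter> E1 E indN \<and>
          dual E indN (spanring E indM J \<inter> E1 E indN) \<and>
          \<not> dual E indN (insert x (spanring E indM J \<inter> E1 E indN)) \<and>
          y \<in> fcirc E (dual E indN) x (spanring E indM J \<inter> E1 E indN) - {x}))"
  unfolding arc_def Let_def by simp

lemma dist_idx: assumes "distinct xs" "distinct is" "set is \<subseteq> {..<length xs}"
  shows "distinct (map ((!) xs) is)"
proof -
  have "inj_on ((!) xs) (set is)"
    unfolding inj_on_def
  proof (intro ballI impI)
    fix x y assume xy: "x \<in> set is" "y \<in> set is" "xs ! x = xs ! y"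
    then have "x < length xs" "y < length xs" using assms(3) by auto
    then show "x = y" using nth_eq_iff_index_eq[OF assms(1)] xy(3) by blast
  qed
  then show ?thesis using assms(2) by (simp add: distinct_map)
qed

lemma sorted_filter_less: assumes "i < j" "j < length (filter P [0..<n])"
  shows "filter P [0..<n] ! i < filter P [0..<n] ! j"
proof -
  have "sorted_wrt (<) (filter P [0..<n])"
    by (simp add: sorted_wrt_filter)
  then show ?thesis using assms sorted_wrt_nth_less by blast
qed

lemma dist_pairs: assumes "distinct xs" "\<forall>k\<in>set L. f k < length xs \<and> g k < length xs"
  "distinct L" "inj_on f (set L)" "inj_on g (set L)" "\<forall>a\<in>set L. \<forall>b\<in>set L. f a \<noteq> g b"
  shows "distinct (map (\<lambda>k. xs ! f k) L @ map (\<lambda>k. xs ! g k) L)"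
proof -
  have eq: "map (\<lambda>k. xs ! f k) L @ map (\<lambda>k. xs ! g k) L = map ((!) xs) (map f L @ map g L)" by simp
  have "distinct (map f L @ map g L)" using assms(3-6) by (auto simp: distinct_map)
  moreover have "set (map f L @ map g L) \<subseteq> {..<length xs}" using assms(2) by auto
  ultimately show ?thesis unfolding eq using dist_idx[OF assms(1)] by blast
qed


context mat begin
lemma fc_mono: assumes "ind I" "ind J" "I \<subseteq> J" "x \<in> E" "x \<notin> J" "\<not> ind (insert x I)"
  shows "\<not> ind (insert x J)" "fcirc E ind x J = fcirc E ind x I"
proof -
  have xI: "x \<notin> I" using assms(3,5) by blast
  note C = fc[OF assms(1,4) xI assms(6)]
  have sub: "fcirc E ind x I \<subseteq> insert x J" using C(2) assms(3) by blast
  show dep: "\<not> ind (insert x J)" using sub ind_sub circD(2)[OF C(1)] by blast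
  show "fcirc E ind x J = fcirc E ind x I" using fc(4)[OF assms(2,4,5) dep C(1) sub] by simp
qed
end

lemma main_aux:
  assumes mM: "matroid E indM" and mN: "matroid E indN"
    and ds: "dually_safe E indM indN I" and fe: "feasible E indM indN I"
    and ap: "aug_path E indM indN I xs"
  shows "let P = set xs; S = spanring E indM I \<inter> E1 E indN; IP = symdiff I P;
             S' = symdiff S (P \<inter> E1 E indN) in
           indM IP \<and> indN IP \<and> dually_safe E indM indN IP \<and>
           span E indM IP = span E indM (insert (last xs) I) \<and>
           span E indN IP \<inter> E0 E indN = span E indN (insert (hd xs) I) \<inter> E0 E indN \<and>
           span E (dual E indN) S = span E (dual E indN) S' \<and>
           dual E indN S'"
proof -
  interpret M: mat E indM using mM by (rule mat.intro)
  interpret N: mat E indN using mN by (rule mat.intro)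
  interpret Ns: mat E "dual E indN" using mat_dual[OF N.mat_axioms] .
  define A0 where "A0 = E0 E indN"
  define A1 where "A1 = E1 E indN"
  have A1d: "A1 = E - A0" unfolding A1_def A0_def E1_def by simp
  have A0E: "A0 \<subseteq> E" unfolding A0_def using N.E0_sub .
  have sep0: "sep E indN A0" unfolding A0_def using N.sep_E0 .
  have sepS1: "sep E (dual E indN) A1" unfolding A1d using N.sep_dual[OF N.sep_compl[OF sep0]] .
  have iI: "indM I" "indN I" using fe unfolding feasible_def by blast+
  obtain n where len: "length xs = 2*n+1" using ap unfolding aug_path_def by blast
  have dist: "distinct xs" using ap unfolding aug_path_def by blast
  define p where "p = (\<lambda>k. xs ! k)"
  have xsne: "xs \<noteq> []" using len by auto
  have hdp: "hd xs = p 0" unfolding p_def using xsne by (simp add: hd_conv_nth)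
  have lastp: "last xs = p (2*n)" unfolding p_def using xsne len by (simp add: last_conv_nth)
  have hp0: "p 0 \<in> A0" "p 0 \<notin> span E indN I" using ap hdp unfolding aug_path_def A0_def by auto
  have hpn: "p (2*n) \<in> A0" "p (2*n) \<notin> span E indM I" using ap lastp unfolding aug_path_def A0_def by auto
  have arcs: "arc E indM indN I (p k) (p (Suc k))" if "k < 2*n" for k
    using ap that len unfolding aug_path_def p_def by auto
  have nos: "\<not> arc E indM indN I (p k) (p l)" if "k + 1 < l" "l < 2*n+1" for k l
    using ap that len unfolding aug_path_def p_def by auto
  have pE: "p k \<in> E" if "k \<le> 2*n" for k
  proof (cases "k < 2*n")
    case True then show ?thesis using arcs[OF True] unfolding arc_def by blast
  next
    case False then have "k = 2*n" using that by simp
    then show ?thesis using hpn A0E by blast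
  qed
  have pinj: "p k = p l \<longleftrightarrow> k = l" if "k \<le> 2*n" "l \<le> 2*n" for k l
    unfolding p_def using nth_eq_iff_index_eq[OF dist] that len by simp
  define S where "S = spanring E indM I \<inter> A1"
  have SI: "S \<inter> I = {}" unfolding S_def spanring_def by blast
  have par: "(even k \<longrightarrow> p k \<notin> I) \<and> (odd k \<longrightarrow> p k \<in> I)" if "k \<le> 2*n" for k
    using that
  proof (induction k)
    case 0 then show ?case using hp0(2) N.span_sup by auto
  next
    case (Suc k)
    then have k: "k < 2*n" by simp
    have IH: "(even k \<longrightarrow> p k \<notin> I) \<and> (odd k \<longrightarrow> p k \<in> I)" using Suc.IH k by simp
    have a: "arc E indM indN I (p k) (p (Suc k))" using arcs[OF k] .
    show ?case
    proof (cases "even k")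
      case True
      then have pk: "p k \<notin> I" using IH by simp
      then have c: "\<not> indM (insert (p k) I)" "p (Suc k) \<in> fcirc E indM (p k) I - {p k}" "p k \<in> E"
        using a unfolding arc_unf by blast+
      have "p (Suc k) \<in> I" using M.fc(2)[OF iI(1) c(3) pk c(1)] c(2) by blast
      then show ?thesis using True by simp
    next
      case False
      then have pk: "p k \<in> I" using IH by simp
      have "p (Suc k) \<notin> I"
      proof -
        consider "p (Suc k) \<notin> I" | "p k \<in> I \<inter> E1 E indN"
            "dual E indN (spanring E indM I \<inter> E1 E indN)"
            "\<not> dual E indN (insert (p k) (spanring E indM I \<inter> E1 E indN))"
            "p (Suc k) \<in> fcirc E (dual E indN) (p k) (spanring E indM I \<inter> E1 E indN) - {p k}"
          using a pk unfolding arc_unf by blast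
        then show ?thesis
        proof cases
          case 2
          have T: "spanring E indM I \<inter> E1 E indN = S" unfolding S_def A1_def ..
          have nT: "p k \<notin> S" using pk SI by blast
          have "p k \<in> E" using pE k by simp
          then have "p (Suc k) \<in> insert (p k) S" using Ns.fc(2)[of S "p k"] 2 nT unfolding T by blast
          then show ?thesis using 2 SI by blast
        qed
      qed
      then show ?thesis using False by simp
    qed
  qed
  define Ev where "Ev = {p (2*k) | k. k \<le> n}"
  define Od where "Od = {p (2*k+1) | k. k < n}"
  have setxs: "set xs = Ev \<union> Od"
  proof
    show "set xs \<subseteq> Ev \<union> Od"
    proof
      fix x assume "x \<in> set xs"
      then obtain i where i: "i < 2*n+1" "x = p i" unfolding p_def using len by (metis in_set_conv_nth)
      show "x \<in> Ev \<union> Od"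
      proof (cases "even i")
        case True
        then obtain k where "i = 2*k" by blast
        then show ?thesis using i Ev_def by auto
      next
        case False
        then obtain k where "i = 2*k+1" using oddE by blast
        then show ?thesis using i Od_def by auto
      qed
    qed
    show "Ev \<union> Od \<subseteq> set xs" unfolding Ev_def Od_def p_def using len by auto
  qed
  have EvI: "x \<notin> I" if "x \<in> Ev" for x using that par unfolding Ev_def by auto
  have OdI: "Od \<subseteq> I" using par unfolding Od_def by auto
  have symIP: "symdiff I (set xs) = (I - Od) \<union> Ev"
    unfolding symdiff_def setxs using EvI OdI by auto
  define JM where "JM = insert (p (2*n)) I"
  have p2nE: "p (2*n) \<in> E" using pE by simp
  have iJM: "indM JM" using hpn(2) M.span_ind[OF iI(1), of "p (2*n)"] p2nE unfolding JM_def by blast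
  define psM where "psM = map (\<lambda>k. (p (2*k), p (2*k+1))) [0..<n]"
  have lpsM: "length psM = n" unfolding psM_def by simp
  have psMk: "psM ! k = (p (2*k), p (2*k+1))" if "k < n" for k unfolding psM_def using that by simp
  have arcM: "\<not> indM (insert (p (2*k)) I) \<and> p (2*k+1) \<in> fcirc E indM (p (2*k)) I" if k: "k < n" for k
  proof -
    have "p (2*k) \<notin> I" using par[of "2*k"] k by simp
    then show ?thesis using arcs[of "2*k"] k unfolding arc_unf by auto
  qed
  have fcM: "\<not> indM (insert (p (2*k)) JM) \<and> fcirc E indM (p (2*k)) JM = fcirc E indM (p (2*k)) I"
     "p (2*k) \<notin> JM" if k: "k < n" for k
  proof -
    have "p (2*k) \<notin> I" using par[of "2*k"] k by simp
    moreover have "p (2*k) \<noteq> p (2*n)" using pinj[of "2*k" "2*n"] k by simp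
    ultimately show nJ: "p (2*k) \<notin> JM" unfolding JM_def by blast
    show "\<not> indM (insert (p (2*k)) JM) \<and> fcirc E indM (p (2*k)) JM = fcirc E indM (p (2*k)) I"
      using M.fc_mono[OF iI(1) iJM _ _ nJ] arcM[OF k] pE[of "2*k"] k unfolding JM_def by auto
  qed
  have bxM: "indM ((JM - snd ` set psM) \<union> fst ` set psM) \<and>
      span E indM ((JM - snd ` set psM) \<union> fst ` set psM) = span E indM JM"
  proof (rule M.bx[OF iJM])
    show "\<forall>k<length psM. fst (psM!k) \<in> E \<and> fst (psM!k) \<notin> JM \<and> snd (psM!k) \<in> JM \<and>
        \<not> indM (insert (fst (psM!k)) JM) \<and> snd (psM!k) \<in> fcirc E indM (fst (psM!k)) JM"
    proof (intro allI impI)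
      fix k assume k: "k < length psM"
      then have k': "k < n" using lpsM by simp
      have "p (2*k+1) \<in> I" using par[of "2*k+1"] k' by simp
      then show "fst (psM!k) \<in> E \<and> fst (psM!k) \<notin> JM \<and> snd (psM!k) \<in> JM \<and>
        \<not> indM (insert (fst (psM!k)) JM) \<and> snd (psM!k) \<in> fcirc E indM (fst (psM!k)) JM"
        using psMk[OF k'] fcM[OF k'] arcM[OF k'] pE[of "2*k"] k' unfolding JM_def by auto
    qed
    show "distinct (map fst psM @ map snd psM)"
    proof -
      have "distinct (map (\<lambda>k. xs ! (2*k)) [0..<n] @ map (\<lambda>k. xs ! (2*k+1)) [0..<n])"
        apply (rule dist_pairs[OF dist])
        apply (simp add: len)
        apply simp
        apply (simp add: inj_on_def)
        apply (simp add: inj_on_def)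
        apply (intro ballI)
        apply presburger
        done
      then show ?thesis unfolding psM_def p_def by (simp add: comp_def)
    qed
    show "\<forall>i j. i < j \<and> j < length psM \<longrightarrow> snd (psM!j) \<notin> fcirc E indM (fst (psM!i)) JM"
    proof (intro allI impI)
      fix i j assume ij: "i < j \<and> j < length psM"
      then have ij': "i < j" "j < n" using lpsM by auto
      show "snd (psM!j) \<notin> fcirc E indM (fst (psM!i)) JM"
      proof
        assume a: "snd (psM!j) \<in> fcirc E indM (fst (psM!i)) JM"
        have ne: "p (2*j+1) \<noteq> p (2*i)" using pinj[of "2*j+1" "2*i"] ij' by simp
        have "p (2*i) \<notin> I" using par[of "2*i"] ij' by simp
        then have "arc E indM indN I (p (2*i)) (p (2*j+1))"
          using a psMk ij' fcM[of i] arcM[of i] pE[of "2*i"] pE[of "2*j+1"] ne unfolding arc_unf by auto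
        then show False using nos[of "2*i" "2*j+1"] ij' by simp
      qed
    qed
  qed
  have sndM: "snd ` set psM = Od" unfolding psM_def Od_def by (auto simp: image_image)
  have fstM: "fst ` set psM = {p (2*k) | k. k < n}" unfolding psM_def by (auto simp: image_image)
  have IPM: "(JM - snd ` set psM) \<union> fst ` set psM = (I - Od) \<union> Ev"
  proof -
    have "p (2*n) \<notin> Od" unfolding Od_def using pinj by fastforce
    moreover have "Ev = insert (p (2*n)) {p (2*k) | k. k < n}" unfolding Ev_def
      using le_less by fastforce
    ultimately show ?thesis unfolding sndM fstM JM_def by blast
  qed
  have TS: "spanring E indM I \<inter> E1 E indN = S" unfolding S_def A1_def ..
  have oddI: "p (2*k+1) \<in> I" if "k < n" for k using par[of "2*k+1"] that by simp
  have evI: "p (2*k+2) \<notin> I" if "k < n" for k using par[of "2*k+2"] that by simp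
  have arc2: "arc E indM indN I (p (2*k+1)) (p (2*k+2))" if "k < n" for k
    using arcs[of "2*k+1"] that by simp
  have hN0: "\<not> indN (insert (p (2*k+2)) I) \<and> p (2*k+1) \<in> fcirc E indN (p (2*k+2)) I \<and> p (2*k+2) \<in> A0"
    if k: "k < n" and a: "p (2*k+1) \<in> A0" for k
  proof -
    have c: "\<not> indN (insert (p (2*k+2)) I)" "p (2*k+1) \<in> fcirc E indN (p (2*k+2)) I"
      using arc2[OF k] oddI[OF k] a A1d unfolding arc_unf A0_def A1_def by auto
    have e: "p (2*k+2) \<in> E" using pE[of "2*k+2"] k by simp
    note C = N.fc[OF iI(2) e evI[OF k] c(1)]
    have "fcirc E indN (p (2*k+2)) I \<subseteq> A0"
      using N.E0_circ[OF C(1) c(2)] a unfolding A0_def by blast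
    then show ?thesis using c C(3) by blast
  qed
  have hN1: "dual E indN S \<and> \<not> dual E indN (insert (p (2*k+1)) S) \<and>
      p (2*k+2) \<in> fcirc E (dual E indN) (p (2*k+1)) S \<and> p (2*k+2) \<in> S \<and> p (2*k+1) \<in> A1"
    if k: "k < n" and a: "p (2*k+1) \<notin> A0" for k
  proof -
    have e: "p (2*k+1) \<in> E" using pE[of "2*k+1"] k by simp
    then have a1: "p (2*k+1) \<in> A1" using a A1d by blast
    have c: "dual E indN S" "\<not> dual E indN (insert (p (2*k+1)) S)"
        "p (2*k+2) \<in> fcirc E (dual E indN) (p (2*k+1)) S"
      using arc2[OF k] oddI[OF k] a A1d unfolding arc_unf TS A0_def A1_def by auto
    have nS: "p (2*k+1) \<notin> S" using oddI[OF k] SI by blast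
    have "p (2*k+2) \<in> S"
    proof -
      have "p (2*k+2) \<in> insert (p (2*k+1)) S" using Ns.fc(2)[OF c(1) e nS c(2)] c(3) by blast
      moreover have "p (2*k+2) \<noteq> p (2*k+1)" using pinj[of "2*k+2" "2*k+1"] k by simp
      ultimately show ?thesis by blast
    qed
    then show ?thesis using c a1 by blast
  qed
  define L0 where "L0 = filter (\<lambda>k. p (2*k+1) \<in> A0) [0..<n]"
  define L1 where "L1 = filter (\<lambda>k. p (2*k+1) \<notin> A0) [0..<n]"
  have L0s: "set L0 = {k. k < n \<and> p (2*k+1) \<in> A0}" unfolding L0_def by auto
  have L1s: "set L1 = {k. k < n \<and> p (2*k+1) \<notin> A0}" unfolding L1_def by auto
  define JN where "JN = insert (p 0) I"
  have p0E: "p 0 \<in> E" using pE by simp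
  have iJN: "indN JN" using hp0(2) N.span_ind[OF iI(2), of "p 0"] p0E unfolding JN_def by blast
  define psN where "psN = map (\<lambda>k. (p (2*k+2), p (2*k+1))) L0"
  have L0k: "L0 ! i < n \<and> p (2 * (L0 ! i) + 1) \<in> A0" if "i < length L0" for i
    using nth_mem[OF that] L0s by blast
  have nJN: "p (2*k+2) \<notin> JN" if k: "k < n" for k
  proof -
    have "p (2*k+2) \<noteq> p 0" using pinj[of "2*k+2" 0] k by simp
    then show ?thesis using evI[OF k] unfolding JN_def by blast
  qed
  have fcN: "\<not> indN (insert (p (2*k+2)) JN) \<and> fcirc E indN (p (2*k+2)) JN = fcirc E indN (p (2*k+2)) I"
     if k: "k < n" and a: "p (2*k+1) \<in> A0" for k
    using N.fc_mono[OF iI(2) iJN _ _ nJN[OF k]] hN0[OF k a] pE[of "2*k+2"] k unfolding JN_def by auto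
  have lpsN: "length psN = length L0" unfolding psN_def by simp
  have psNk: "psN ! i = (p (2*(L0!i)+2), p (2*(L0!i)+1))" if "i < length L0" for i
    unfolding psN_def using that by simp
  have bxN: "indN ((JN - snd ` set psN) \<union> fst ` set psN) \<and>
      span E indN ((JN - snd ` set psN) \<union> fst ` set psN) = span E indN JN"
  proof (rule N.bx_rev[OF iJN])
    show "\<forall>i<length psN. fst (psN!i) \<in> E \<and> fst (psN!i) \<notin> JN \<and> snd (psN!i) \<in> JN \<and>
        \<not> indN (insert (fst (psN!i)) JN) \<and> snd (psN!i) \<in> fcirc E indN (fst (psN!i)) JN"
    proof (intro allI impI)
      fix i assume i: "i < length psN"
      then have i': "i < length L0" using lpsN by simp
      define k where "k = L0 ! i"
      have k: "k < n" "p (2*k+1) \<in> A0" using L0k[OF i'] k_def by blast+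
      show "fst (psN!i) \<in> E \<and> fst (psN!i) \<notin> JN \<and> snd (psN!i) \<in> JN \<and>
        \<not> indN (insert (fst (psN!i)) JN) \<and> snd (psN!i) \<in> fcirc E indN (fst (psN!i)) JN"
        using psNk[OF i'] k_def fcN[OF k] hN0[OF k] nJN[OF k(1)] oddI[OF k(1)] pE[of "2*k+2"] k(1)
        unfolding JN_def by auto
    qed
    show "distinct (map fst psN @ map snd psN)"
    proof -
      have "distinct (map (\<lambda>k. xs ! (2*k+2)) L0 @ map (\<lambda>k. xs ! (2*k+1)) L0)"
        apply (rule dist_pairs[OF dist])
        apply (simp add: len L0s)
        apply (simp add: L0_def)
        apply (simp add: inj_on_def)
        apply (simp add: inj_on_def)
        apply (intro ballI)
        apply presburger
        done
      then show ?thesis unfolding psN_def p_def by (simp add: comp_def)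
    qed
    show "\<forall>i j. i < j \<and> j < length psN \<longrightarrow> snd (psN!i) \<notin> fcirc E indN (fst (psN!j)) JN"
    proof (intro allI impI)
      fix i j assume ij: "i < j \<and> j < length psN"
      then have ij': "i < j" "j < length L0" "i < length L0" using lpsN by auto
      define ki where "ki = L0 ! i"
      define kj where "kj = L0 ! j"
      have kk: "ki < kj" using sorted_filter_less[of i j] ij' unfolding ki_def kj_def L0_def by blast
      have ki: "ki < n" "p (2*ki+1) \<in> A0" using L0k[OF ij'(3)] ki_def by blast+
      have kj: "kj < n" "p (2*kj+1) \<in> A0" using L0k[OF ij'(2)] kj_def by blast+
      show "snd (psN!i) \<notin> fcirc E indN (fst (psN!j)) JN"
      proof
        assume a: "snd (psN!i) \<in> fcirc E indN (fst (psN!j)) JN"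
        then have a': "p (2*ki+1) \<in> fcirc E indN (p (2*kj+2)) I"
          using psNk[OF ij'(2)] psNk[OF ij'(3)] fcN[OF kj] ki_def kj_def by simp
        have "arc E indM indN I (p (2*ki+1)) (p (2*kj+2))"
          unfolding arc_unf
          using a' oddI[OF ki(1)] ki(2) evI[OF kj(1)] hN0[OF kj] pE[of "2*ki+1"] pE[of "2*kj+2"] ki(1) kj(1)
          unfolding A0_def by auto
        then show False using nos[of "2*ki+1" "2*kj+2"] kk kj(1) by simp
      qed
    qed
  qed
  have L1k: "L1 ! i < n \<and> p (2 * (L1 ! i) + 1) \<notin> A0" if "i < length L1" for i
    using nth_mem[OF that] L1s by blast
  define psS where "psS = map (\<lambda>k. (p (2*k+1), p (2*k+2))) L1"
  have lpsS: "length psS = length L1" unfolding psS_def by simp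
  have psSk: "psS ! i = (p (2*(L1!i)+1), p (2*(L1!i)+2))" if "i < length L1" for i
    unfolding psS_def using that by simp
  have iS: "dual E indN S" using feas_W[OF M.mat_axioms N.mat_axioms fe] Ns.ind_sub unfolding S_def by blast
  have bxS: "dual E indN ((S - snd ` set psS) \<union> fst ` set psS) \<and>
      span E (dual E indN) ((S - snd ` set psS) \<union> fst ` set psS) = span E (dual E indN) S"
  proof (rule Ns.bx[OF iS])
    show "\<forall>i<length psS. fst (psS!i) \<in> E \<and> fst (psS!i) \<notin> S \<and> snd (psS!i) \<in> S \<and>
        \<not> dual E indN (insert (fst (psS!i)) S) \<and> snd (psS!i) \<in> fcirc E (dual E indN) (fst (psS!i)) S"
    proof (intro allI impI)
      fix i assume i: "i < length psS"
      then have i': "i < length L1" using lpsS by simp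
      define k where "k = L1 ! i"
      have k: "k < n" "p (2*k+1) \<notin> A0" using L1k[OF i'] k_def by blast+
      have "p (2*k+1) \<notin> S" using oddI[OF k(1)] SI by blast
      then show "fst (psS!i) \<in> E \<and> fst (psS!i) \<notin> S \<and> snd (psS!i) \<in> S \<and>
        \<not> dual E indN (insert (fst (psS!i)) S) \<and> snd (psS!i) \<in> fcirc E (dual E indN) (fst (psS!i)) S"
        using psSk[OF i'] k_def hN1[OF k] pE[of "2*k+1"] k(1) by auto
    qed
    show "distinct (map fst psS @ map snd psS)"
    proof -
      have "distinct (map (\<lambda>k. xs ! (2*k+1)) L1 @ map (\<lambda>k. xs ! (2*k+2)) L1)"
        apply (rule dist_pairs[OF dist])
        apply (simp add: len L1s)
        apply (simp add: L1_def)
        apply (simp add: inj_on_def)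
        apply (simp add: inj_on_def)
        apply (intro ballI)
        apply presburger
        done
      then show ?thesis unfolding psS_def p_def by (simp add: comp_def)
    qed
    show "\<forall>i j. i < j \<and> j < length psS \<longrightarrow> snd (psS!j) \<notin> fcirc E (dual E indN) (fst (psS!i)) S"
    proof (intro allI impI)
      fix i j assume ij: "i < j \<and> j < length psS"
      then have ij': "i < j" "j < length L1" "i < length L1" using lpsS by auto
      define ki where "ki = L1 ! i"
      define kj where "kj = L1 ! j"
      have kk: "ki < kj" using sorted_filter_less[of i j] ij' unfolding ki_def kj_def L1_def by blast
      have ki: "ki < n" "p (2*ki+1) \<notin> A0" using L1k[OF ij'(3)] ki_def by blast+
      have kj: "kj < n" "p (2*kj+1) \<notin> A0" using L1k[OF ij'(2)] kj_def by blast+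
      show "snd (psS!j) \<notin> fcirc E (dual E indN) (fst (psS!i)) S"
      proof
        assume a: "snd (psS!j) \<in> fcirc E (dual E indN) (fst (psS!i)) S"
        then have a': "p (2*kj+2) \<in> fcirc E (dual E indN) (p (2*ki+1)) S"
          using psSk[OF ij'(2)] psSk[OF ij'(3)] ki_def kj_def by simp
        have "2*kj+2 \<noteq> 2*ki+1" by presburger
        then have ne: "p (2*kj+2) \<noteq> p (2*ki+1)" using pinj[of "2*kj+2" "2*ki+1"] kj(1) ki(1) by simp
        have "arc E indM indN I (p (2*ki+1)) (p (2*kj+2))"
          unfolding arc_unf TS
          using a' ne oddI[OF ki(1)] hN1[OF ki] pE[of "2*ki+1"] pE[of "2*kj+2"] ki(1) kj(1)
          unfolding A1_def by auto
        then show False using nos[of "2*ki+1" "2*kj+2"] kk kj(1) by simp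
      qed
    qed
  qed
  define A0s where "A0s = (\<lambda>k. p (2*k+2)) ` set L0"
  define B0s where "B0s = (\<lambda>k. p (2*k+1)) ` set L0"
  define A1s where "A1s = (\<lambda>k. p (2*k+2)) ` set L1"
  define B1s where "B1s = (\<lambda>k. p (2*k+1)) ` set L1"
  have fN: "fst ` set psN = A0s" "snd ` set psN = B0s" unfolding psN_def A0s_def B0s_def by (auto simp: image_image)
  have fS: "fst ` set psS = B1s" "snd ` set psS = A1s" unfolding psS_def A1s_def B1s_def by (auto simp: image_image)
  have A0sA0: "A0s \<subseteq> A0" unfolding A0s_def L0s using hN0 by auto
  have B0sA0: "B0s \<subseteq> A0" unfolding B0s_def L0s by auto
  have A1sS: "A1s \<subseteq> S" unfolding A1s_def L1s using hN1 by auto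
  have B1sA1: "B1s \<subseteq> A1" unfolding B1s_def L1s using hN1 by auto
  have SA1: "S \<subseteq> A1" unfolding S_def by blast
  have B0sI: "B0s \<subseteq> I" unfolding B0s_def L0s using oddI by auto
  have B1sI: "B1s \<subseteq> I" unfolding B1s_def L1s using oddI by auto
  have A0sI: "A0s \<inter> I = {}" unfolding A0s_def L0s using evI by auto
  have A1sI: "A1s \<inter> I = {}" unfolding A1s_def L1s using evI by auto
  have A01: "A0 \<inter> A1 = {}" unfolding A1d by blast
  have F1: "Od = B0s \<union> B1s" unfolding Od_def B0s_def B1s_def L0s L1s by auto
  have F2: "Ev = insert (p 0) (A0s \<union> A1s)"
  proof
    show "Ev \<subseteq> insert (p 0) (A0s \<union> A1s)"
    proof
      fix x assume "x \<in> Ev"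
      then obtain k where k: "k \<le> n" "x = p (2*k)" unfolding Ev_def by blast
      show "x \<in> insert (p 0) (A0s \<union> A1s)"
      proof (cases k)
        case 0 then show ?thesis using k by simp
      next
        case (Suc j)
        then have "j < n" "x = p (2*j+2)" using k by auto
        then show ?thesis unfolding A0s_def A1s_def L0s L1s by auto
      qed
    qed
    show "insert (p 0) (A0s \<union> A1s) \<subseteq> Ev"
    proof
      fix x assume x: "x \<in> insert (p 0) (A0s \<union> A1s)"
      show "x \<in> Ev"
      proof (cases "x = p 0")
        case True then show ?thesis unfolding Ev_def by force
      next
        case False
        then obtain j where "j < n" "x = p (2*j+2)" using x unfolding A0s_def A1s_def L0s L1s by auto
        then have "Suc j \<le> n" "x = p (2 * Suc j)" by auto
        then show ?thesis unfolding Ev_def by blast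
      qed
    qed
  qed
  define IP where "IP = (I - Od) \<union> Ev"
  define J' where "J' = (JN - B0s) \<union> A0s"
  define S'' where "S'' = (S - A1s) \<union> B1s"
  have iJ': "indN J'" using bxN fN unfolding J'_def by simp
  have spJ': "span E indN J' = span E indN JN" using bxN fN unfolding J'_def by simp
  have iS'': "dual E indN S''" using bxS fS unfolding S''_def by simp
  have spS'': "span E (dual E indN) S'' = span E (dual E indN) S" using bxS fS unfolding S''_def by simp
  have iIP: "indM IP" using bxM IPM unfolding IP_def by simp
  have spIP: "span E indM IP = span E indM JM" using bxM IPM unfolding IP_def by simp
  have IPE: "IP \<subseteq> E"
    using M.subE[OF iIP] .
  have F7: "IP \<inter> A0 = J' \<inter> A0"
  proof -
    have "IP \<inter> A0 = ((I - B0s) \<inter> A0) \<union> insert (p 0) A0s"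
      unfolding IP_def F1 F2 using B1sA1 A01 hp0(1) A0sA0 A1sS SA1 by blast
    moreover have "J' \<inter> A0 = ((I - B0s) \<inter> A0) \<union> insert (p 0) A0s"
      unfolding J'_def JN_def using hp0(1) A0sA0 B0sI evI hp0 par[of 0] by auto
    ultimately show ?thesis by simp
  qed
  have P1: "set xs \<inter> E1 E indN = A1s \<union> B1s"
  proof -
    have "E1 E indN = A1" unfolding A1_def ..
    moreover have "(Ev \<union> Od) \<inter> A1 = A1s \<union> B1s"
      unfolding F1 F2 using hp0(1) A0sA0 B0sA0 A1sS SA1 B1sA1 A01 by blast
    ultimately show ?thesis using setxs by simp
  qed
  have F6: "symdiff S (set xs \<inter> E1 E indN) = S''"
    unfolding P1 symdiff_def S''_def using A1sS B1sI SI by blast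
  define W where "W = spanring E indM I"
  have iW: "dual E indN W" using feas_W[OF M.mat_axioms N.mat_axioms fe] W_def by simp
  have SW: "S = W \<inter> A1" unfolding S_def W_def ..
  have WI: "W \<inter> I = {}" unfolding W_def spanring_def by blast
  have IA1: "I \<inter> A1 \<subseteq> span E (dual E indN) S"
  proof
    fix e assume e: "e \<in> I \<inter> A1"
    then have "e \<in> span E (dual E indN) W" using ds unfolding dually_safe_def W_def A1_def by blast
    moreover have "e \<notin> W" using e WI by blast
    ultimately have "\<not> dual E indN (insert e W)" "e \<in> E" using Ns.span_ind[OF iW] by blast+
    then have "\<not> dual E indN (insert e S)" using Ns.sep_ins[OF sepS1 iW, of e] e SW by blast
    then show "e \<in> span E (dual E indN) S" using Ns.span_ind[OF iS] \<open>e \<in> E\<close> by blast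
  qed
  define Z where "Z = S \<union> (I \<inter> A1)"
  have Zsp: "Z \<subseteq> span E (dual E indN) S''" unfolding spS'' Z_def using IA1 Ns.span_sup by blast
  have SZ: "S'' \<subseteq> Z" unfolding S''_def Z_def using B1sI B1sA1 by blast
  obtain Bs where Bs: "base E (dual E indN) Bs" "S'' \<subseteq> Bs" using Ns.base_ext[OF iS''] by blast
  have ZB: "(Z - S'') \<inter> Bs = {}"
  proof -
    have "z \<notin> Bs" if z: "z \<in> Z - S''" for z
    proof
      assume zB: "z \<in> Bs"
      have "z \<in> span E (dual E indN) S''" using z Zsp by blast
      then have "\<not> dual E indN (insert z S'')" using Ns.span_ind[OF iS''] z by blast
      moreover have "insert z S'' \<subseteq> Bs" using zB Bs(2) by blast
      ultimately show False using Ns.ind_sub Ns.baseD(1)[OF Bs(1)] by blast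
    qed
    then show ?thesis by blast
  qed
  have ZE: "Z - S'' \<subseteq> E" unfolding Z_def S_def A1d by blast
  have iZ: "indN (Z - S'')"
    using Ns.dualI[OF ZE Bs(1) ZB] N.dual_dual by simp
  have IPA1: "IP \<inter> A1 \<subseteq> Z - S''"
    unfolding IP_def F2 Z_def S''_def using hp0(1) A0sA0 A01 A1sS SI B1sI A1sI F1 by blast
  have iIPN: "indN IP"
  proof -
    have "indN (IP \<inter> A0)" using F7 iJ' N.ind_sub by (metis inf_le1)
    moreover have "IP - A0 = IP \<inter> A1" using IPE A1d by blast
    moreover have "indN (IP \<inter> A1)" using IPA1 iZ N.ind_sub by blast
    ultimately show ?thesis using N.sepD[OF sep0, of IP] IPE by simp
  qed
  have spN: "span E indN IP \<inter> A0 = span E indN JN \<inter> A0"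
  proof -
    have "e \<in> span E indN IP \<longleftrightarrow> e \<in> span E indN J'" if e: "e \<in> A0" for e
    proof -
      have eE: "e \<in> E" using e A0E by blast
      have "e \<in> span E indN IP \<longleftrightarrow> e \<in> IP \<inter> A0 \<or> \<not> indN (insert e (IP \<inter> A0))"
        using N.span_ind[OF iIPN] N.sep_ins[OF sep0 iIPN e] eE e by blast
      moreover have "e \<in> span E indN J' \<longleftrightarrow> e \<in> J' \<inter> A0 \<or> \<not> indN (insert e (J' \<inter> A0))"
        using N.span_ind[OF iJ'] N.sep_ins[OF sep0 iJ' e] eE e by blast
      ultimately show ?thesis using F7 by simp
    qed
    then show ?thesis using spJ' by blast
  qed
  have S''sp: "S'' \<subseteq> spanring E indM IP"
  proof
    fix x assume x: "x \<in> S''"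
    have sIJ: "span E indM I \<subseteq> span E indM IP" unfolding spIP JM_def using M.span_mono by blast
    show "x \<in> spanring E indM IP"
    proof (cases "x \<in> B1s")
      case True
      then have "x \<in> span E indM IP" using B1sI sIJ M.span_sup by blast
      moreover have "x \<notin> IP" unfolding IP_def using True F1 B1sI EvI by blast
      ultimately show ?thesis unfolding spanring_def by blast
    next
      case False
      then have xS: "x \<in> S - A1s" using x S''_def by blast
      then have "x \<in> span E indM I" unfolding S_def spanring_def by blast
      then have "x \<in> span E indM IP" using sIJ by blast
      moreover have "x \<notin> IP" unfolding IP_def F2 using xS SI hp0(1) A0sA0 A01 SA1 by blast
      ultimately show ?thesis unfolding spanring_def by blast
    qed
  qed
  have dsIP: "dually_safe E indM indN IP"
  proof -
    have "IP \<inter> A1 \<subseteq> span E (dual E indN) S''" using IPA1 Zsp by blast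
    also have "\<dots> \<subseteq> span E (dual E indN) (spanring E indM IP)" using Ns.span_mono[OF S''sp] .
    finally show ?thesis unfolding dually_safe_def A1_def .
  qed
  show ?thesis
    unfolding Let_def TS symIP[folded IP_def] F6
    using iIP iIPN dsIP spIP spN iS'' spS'' lastp hdp unfolding JM_def JN_def A0_def
    by simp

qed


theorem mainTheorem14:
  fixes E :: "'a set" and indM indN :: "'a set \<Rightarrow> bool" and I :: "'a set" and xs :: "'a list"
  assumes "countable E"
    and "matroid E indM" and "finitary E indM"
    and "matroid E indN" and "fin_cofin_sum E indN"
    and "dually_safe E indM indN I"
    and "feasible E indM indN I"
    and "aug_path E indM indN I xs"
  shows "let P = set xs; S = spanring E indM I \<inter> E1 E indN; IP = symdiff I P;
             S' = symdiff S (P \<inter> E1 E indN) in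
           indM IP \<and> indN IP \<and> dually_safe E indM indN IP \<and>
           span E indM IP = span E indM (insert (last xs) I) \<and>
           span E indN IP \<inter> E0 E indN = span E indN (insert (hd xs) I) \<inter> E0 E indN \<and>
           span E (dual E indN) S = span E (dual E indN) S' \<and>
           dual E indN S'"
    using main_aux[OF assms(2) assms(4) assms(6) assms(7) assms(8)] .

end
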